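(* Let $(G,E)$ be a connected simple graph with countably infinite vertex set and bounded degree, $\mu$ a conductance with $(G,\mu)$ satisfying $(p_0)$, $R$ the effective resistance, and assume $\mu$ satisfies $(\mathrm{VD})_R$, $\mathrm{diam}(G,R)=\infty$ and $V_R(x,r)<\infty$ for all $x\in G$, $r>0$. Then (1) there exist a metric $d$ on $G$ and $\beta>\alpha\ge1$ such that $d$ is quasisymmetric to $R$; $R(x,y)V_d(x,d(x,y))\asymp d(x,y)^\beta$ for all $x,y\in G$; and there is $C>0$ with $V_d(x,r)\le C(r/s)^\alpha V_d(x,s)$ for all $x\in G$ and $r>s>0$. (2) Moreover $d$ can be chosen to additionally satisfy: $\inf_{x\ne y}d(x,y)=r_0>0$; there is $C_+>0$ with $d(x,y)\le C_+$ for all $x\sim y$; and $B_d(x,r)$ is finite for all $x\in G$, $r>0$.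
   Context: $\mu_x=\sum_{y\sim x}\mu_{xy}$, $\mu(A)=\sum_{x\in A}\mu_x$, $V_\rho(x,r)=\mu(B_\rho(x,r))$. $(p_0)$: $\mu_{xy}/\mu_x\ge p_0>0$ for $x\sim y$. $(\mathrm{VD})_R$: $V_R(x,2r)\le CV_R(x,r)$ for all $x$, $r>0$. $R(x,y)=(\inf\{\frac12\sum_{(u,v)\in E}(f(u)-f(v))^2\mu_{uv}:f(x)=1,f(y)=0\})^{-1}$. Quasisymmetry: $R(x,y)$... i.e. $d$ is quasisymmetric to $R$ if $R(x,y)/R(x,z)\le\theta(d(x,y)/d(x,z))$ for all $x\ne z$ and some homeomorphism $\theta$ of $[0,\infty)$. *)

theory Defs
  imports "HOL-Analysis.Analysis" "HOL-Library.Countable_Set"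
begin

definition simple_graph :: "('a \<Rightarrow> 'a \<Rightarrow> bool) \<Rightarrow> bool" where
  "simple_graph E \<longleftrightarrow> (\<forall>x y. E x y \<longrightarrow> E y x) \<and> (\<forall>x. \<not> E x x)"

definition connected_graph :: "('a \<Rightarrow> 'a \<Rightarrow> bool) \<Rightarrow> bool" where
  "connected_graph E \<longleftrightarrow> (\<forall>x y. E\<^sup>*\<^sup>* x y)"

definition bounded_degree :: "('a \<Rightarrow> 'a \<Rightarrow> bool) \<Rightarrow> bool" where
  "bounded_degree E \<longleftrightarrow> (\<exists>M::nat. \<forall>x. finite {y. E x y} \<and> card {y. E x y} \<le> M)"

text \<open>A conductance: symmetric, strictly positive on edges (values off edges are irrelevant).\<close>
definition conductance :: "('a \<Rightarrow> 'a \<Rightarrow> bool) \<Rightarrow> ('a \<Rightarrow> 'a \<Rightarrow> real) \<Rightarrow> bool" where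
  "conductance E mu \<longleftrightarrow> (\<forall>x y. E x y \<longrightarrow> mu x y > 0 \<and> mu x y = mu y x)"

definition vmeas :: "('a \<Rightarrow> 'a \<Rightarrow> bool) \<Rightarrow> ('a \<Rightarrow> 'a \<Rightarrow> real) \<Rightarrow> 'a \<Rightarrow> real" where
  "vmeas E mu x = (\<Sum>y\<in>{y. E x y}. mu x y)"

definition p0_cond :: "('a \<Rightarrow> 'a \<Rightarrow> bool) \<Rightarrow> ('a \<Rightarrow> 'a \<Rightarrow> real) \<Rightarrow> bool" where
  "p0_cond E mu \<longleftrightarrow> (\<exists>p0>0. \<forall>x y. E x y \<longrightarrow> mu x y / vmeas E mu x \<ge> p0)"

definition gmeas :: "('a \<Rightarrow> 'a \<Rightarrow> bool) \<Rightarrow> ('a \<Rightarrow> 'a \<Rightarrow> real) \<Rightarrow> 'a set \<Rightarrow> ennreal" where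
  "gmeas E mu A = (\<Sum>\<^sub>\<infinity>x\<in>A. ennreal (vmeas E mu x))"

definition gball :: "('a \<Rightarrow> 'a \<Rightarrow> real) \<Rightarrow> 'a \<Rightarrow> real \<Rightarrow> 'a set" where
  "gball rho x r = {y. rho x y < r}"

definition gvol :: "('a \<Rightarrow> 'a \<Rightarrow> bool) \<Rightarrow> ('a \<Rightarrow> 'a \<Rightarrow> real) \<Rightarrow> ('a \<Rightarrow> 'a \<Rightarrow> real) \<Rightarrow> 'a \<Rightarrow> real \<Rightarrow> ennreal" where
  "gvol E mu rho x r = gmeas E mu (gball rho x r)"

definition energy :: "('a \<Rightarrow> 'a \<Rightarrow> bool) \<Rightarrow> ('a \<Rightarrow> 'a \<Rightarrow> real) \<Rightarrow> ('a \<Rightarrow> real) \<Rightarrow> ennreal" where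
  "energy E mu f = (\<Sum>\<^sub>\<infinity>(u,v)\<in>{(u,v). E u v}. ennreal ((f u - f v)\<^sup>2 * mu u v)) / 2"

definition eff_res :: "('a \<Rightarrow> 'a \<Rightarrow> bool) \<Rightarrow> ('a \<Rightarrow> 'a \<Rightarrow> real) \<Rightarrow> 'a \<Rightarrow> 'a \<Rightarrow> real" where
  "eff_res E mu x y = enn2real (inverse (INF f\<in>{f. f x = 1 \<and> f y = 0}. energy E mu f))"

definition volume_doubling :: "('a \<Rightarrow> 'a \<Rightarrow> bool) \<Rightarrow> ('a \<Rightarrow> 'a \<Rightarrow> real) \<Rightarrow> ('a \<Rightarrow> 'a \<Rightarrow> real) \<Rightarrow> bool" where
  "volume_doubling E mu rho \<longleftrightarrow>
     (\<exists>C. \<forall>x r. r > 0 \<longrightarrow> gvol E mu rho x (2 * r) \<le> ennreal C * gvol E mu rho x r)"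

definition is_metric :: "('a \<Rightarrow> 'a \<Rightarrow> real) \<Rightarrow> bool" where
  "is_metric d \<longleftrightarrow> (\<forall>x y. d x y \<ge> 0) \<and> (\<forall>x y. d x y = 0 \<longleftrightarrow> x = y)
     \<and> (\<forall>x y. d x y = d y x) \<and> (\<forall>x y z. d x z \<le> d x y + d y z)"

definition quasisymmetric_to :: "('a \<Rightarrow> 'a \<Rightarrow> real) \<Rightarrow> ('a \<Rightarrow> 'a \<Rightarrow> real) \<Rightarrow> bool" where
  "quasisymmetric_to d R \<longleftrightarrow>
     (\<exists>\<theta> \<theta>'. homeomorphism {0::real..} {0..} \<theta> \<theta>' \<and>
        (\<forall>x y z. x \<noteq> z \<longrightarrow> R x y / R x z \<le> \<theta> (d x y / d x z)))"

end

theory Submission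
  imports Defs
begin


lemma infsum_cmult_ennreal:
  fixes f :: "'b \<Rightarrow> ennreal"
  shows "infsum (\<lambda>x. c * f x) A = c * infsum f A"
proof -
  have "infsum (\<lambda>x. c * f x) A = (SUP F\<in>{F. finite F \<and> F\<subseteq>A}. sum (\<lambda>x. c * f x) F)"
    by (rule nonneg_infsum_complete) simp
  also have "\<dots> = (SUP F\<in>{F. finite F \<and> F\<subseteq>A}. c * sum f F)"
    by (simp add: sum_distrib_left)
  also have "\<dots> = c * (SUP F\<in>{F. finite F \<and> F\<subseteq>A}. sum f F)"
    by (simp add: SUP_mult_left_ennreal)
  also have "\<dots> = c * infsum f A"
    by (subst nonneg_infsum_complete[of A f]) simp_all
  finally show ?thesis .
qed

lemma infsum_ge_single_ennreal:
  fixes f :: "'b \<Rightarrow> ennreal"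
  assumes "a \<in> A" shows "f a \<le> infsum f A"
proof -
  have "infsum f {a} \<le> infsum f A"
    by (rule infsum_mono_neutral) (use assms in \<open>auto intro: nonneg_summable_on_complete\<close>)
  thus ?thesis by simp
qed

lemma infsum_mono_set_ennreal:
  fixes f :: "'b \<Rightarrow> ennreal"
  assumes "A \<subseteq> B" shows "infsum f A \<le> infsum f B"
  by (rule infsum_mono_neutral) (use assms in \<open>auto intro: nonneg_summable_on_complete\<close>)

lemma sq_sum_le: "(a + b)\<^sup>2 \<le> 2 * a\<^sup>2 + 2 * (b::real)\<^sup>2"
proof -
  have "0 \<le> (a - b)\<^sup>2" by simp
  thus ?thesis unfolding power2_sum power2_diff by linarith
qed

locale rgraph =
  fixes E :: "'a \<Rightarrow> 'a \<Rightarrow> bool" and mu :: "'a \<Rightarrow> 'a \<Rightarrow> real"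
  assumes inf: "infinite (UNIV :: 'a set)"
    and sg: "simple_graph E" and conn: "connected_graph E" and bd: "bounded_degree E"
    and cond: "conductance E mu" and p0c: "p0_cond E mu"
    and vd: "volume_doubling E mu (eff_res E mu)"
    and unb: "\<forall>M. \<exists>x y. eff_res E mu x y > M"
    and finv: "\<forall>x r. r > 0 \<longrightarrow> gvol E mu (eff_res E mu) x r < \<infinity>"
begin

abbreviation "mx \<equiv> vmeas E mu"
abbreviation "R \<equiv> eff_res E mu"
abbreviation "En \<equiv> energy E mu"

lemma E_sym: "E x y \<Longrightarrow> E y x" using sg unfolding simple_graph_def by blast
lemma E_irr: "\<not> E x x" using sg unfolding simple_graph_def by blast
lemma finN: "finite {y. E x y}" using bd unfolding bounded_degree_def by blast
lemma mu_pos: "E x y \<Longrightarrow> mu x y > 0" using cond unfolding conductance_def by blast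
lemma mu_sym: "E x y \<Longrightarrow> mu x y = mu y x" using cond unfolding conductance_def by blast

lemma has_nb: "\<exists>y. E x y"
proof -
  obtain y where "y \<noteq> x" using inf by (metis UNIV_eq_I finite.emptyI finite_insert insertCI)
  moreover have "E\<^sup>*\<^sup>* x y" using conn unfolding connected_graph_def by blast
  ultimately show ?thesis by (metis converse_rtranclpE)
qed

lemma mx_pos: "mx x > 0"
proof -
  obtain y where y: "E x y" using has_nb by blast
  show ?thesis unfolding vmeas_def
    by (rule sum_pos2[of _ y]) (use y finN mu_pos in \<open>auto intro: less_imp_le\<close>)
qed

lemma mu_le_mx: "E x y \<Longrightarrow> mu x y \<le> mx x"
  unfolding vmeas_def by (rule member_le_sum) (use finN mu_pos in \<open>auto intro: less_imp_le\<close>)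

lemma energy_affine: "En (\<lambda>u. c * f u + k) = ennreal (c^2) * En f"
proof -
  let ?g = "\<lambda>(u,v). ennreal ((f u - f v)\<^sup>2 * mu u v)"
  have "En (\<lambda>u. c * f u + k) = (\<Sum>\<^sub>\<infinity>p\<in>{(u,v). E u v}. ennreal (c^2) * ?g p) / 2"
    unfolding energy_def
    by (rule arg_cong[where f="\<lambda>t. t/2"], rule infsum_cong)
       (auto simp: ennreal_mult'[symmetric] algebra_simps power2_eq_square split: prod.splits)
  also have "\<dots> = (ennreal (c^2) * (\<Sum>\<^sub>\<infinity>p\<in>{(u,v). E u v}. ?g p)) / 2"
    by (subst infsum_cmult_ennreal) simp
  also have "\<dots> = ennreal (c^2) * En f"
    unfolding energy_def by (simp add: divide_ennreal_def mult.assoc)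
  finally show ?thesis .
qed

lemma energy_ge_term: "E u v \<Longrightarrow> ennreal ((f u - f v)\<^sup>2 * mu u v) / 2 \<le> En f"
  unfolding energy_def
  by (rule divide_right_mono_ennreal, rule infsum_ge_single_ennreal[where f="\<lambda>(u,v). ennreal ((f u - f v)\<^sup>2 * mu u v)" and a="(u,v)", simplified])
     auto


lemma energy_ind: "En (\<lambda>w. if w = x then 1 else 0) = ennreal (mx x)"
proof -
  define f :: "'a \<Rightarrow> real" where "f = (\<lambda>w. if w = x then 1 else 0)"
  define N where "N = {y. E x y}"
  define t where "t = (\<lambda>(u,v). ennreal ((f u - f v)\<^sup>2 * mu u v))"
  define S1 where "S1 = Pair x ` N"
  define S2 where "S2 = (\<lambda>u. (u,x)) ` N"
  have fN: "finite N" using finN N_def by simp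
  have xN: "x \<notin> N" using E_irr N_def by auto
  have "infsum t {(u,v). E u v} = infsum t (S1 \<union> S2)"
  proof (rule infsum_cong_neutral)
    fix p assume "p \<in> {(u,v). E u v} - (S1 \<union> S2)"
    then obtain u v where p: "p = (u,v)" "E u v" "p \<notin> S1" "p \<notin> S2" by auto
    have "u \<noteq> x" using p S1_def N_def by auto
    moreover have "v \<noteq> x" using p S2_def N_def E_sym by auto
    ultimately show "t p = 0" using p t_def f_def by simp
  next
    fix p assume "p \<in> (S1 \<union> S2) - {(u,v). E u v}"
    thus "t p = 0" using S1_def S2_def N_def E_sym by auto
  qed simp
  also have "\<dots> = sum t S1 + sum t S2"
    using fN xN by (subst infsum_finite) (auto simp: S1_def S2_def intro!: sum.union_disjoint)
  also have "sum t S1 = (\<Sum>v\<in>N. ennreal (mu x v))"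
    unfolding S1_def by (subst sum.reindex) (use xN in \<open>auto simp: inj_on_def t_def f_def intro!: sum.cong\<close>)
  also have "sum t S2 = (\<Sum>v\<in>N. ennreal (mu x v))"
    unfolding S2_def by (subst sum.reindex) (use xN in \<open>auto simp: inj_on_def t_def f_def N_def mu_sym E_sym intro!: sum.cong\<close>)
  also have "(\<Sum>v\<in>N. ennreal (mu x v)) = ennreal (mx x)"
    unfolding vmeas_def N_def by (rule sum_ennreal) (use mu_pos in \<open>auto intro: less_imp_le\<close>)
  finally have "infsum t {(u,v). E u v} = ennreal (mx x) + ennreal (mx x)" .
  also have "ennreal (mx x) + ennreal (mx x) = ennreal (2 * mx x)"
    using mx_pos[of x] by (simp add: ennreal_plus[symmetric] del: ennreal_plus)
  finally have "infsum t {(u,v). E u v} / 2 = ennreal (2 * mx x) / ennreal 2" by simp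
  also have "\<dots> = ennreal (mx x)" using mx_pos[of x] by (subst divide_ennreal) auto
  finally show ?thesis unfolding energy_def f_def[symmetric] t_def[symmetric] .
qed

lemma path_bound: "\<exists>c>0. \<forall>f. ennreal (c * (f x - f y)\<^sup>2) \<le> En f"
proof -
  have "E\<^sup>*\<^sup>* x y" using conn unfolding connected_graph_def by blast
  thus ?thesis
  proof (induction rule: rtranclp_induct)
    case base
    show ?case by (rule exI[of _ 1]) simp
  next
    case (step y z)
    then obtain c where c: "c > 0" "\<And>f. ennreal (c * (f x - f y)\<^sup>2) \<le> En f" by blast
    have m: "mu y z > 0" using mu_pos step by blast
    define c' where "c' = 1 / (2 / c + 4 / mu y z)"
    have c'p: "c' > 0" using c m unfolding c'_def by (simp add: add_pos_pos)
    show ?case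
    proof (intro exI[of _ c'] conjI allI c'p)
      fix f :: "'a \<Rightarrow> real"
      show "ennreal (c' * (f x - f z)\<^sup>2) \<le> En f"
      proof (cases "En f = \<infinity>")
        case False
        define e where "e = enn2real (En f)"
        have ee: "En f = ennreal e" "e \<ge> 0" using False e_def by (auto simp: ennreal_enn2real_if)
        have h1: "c * (f x - f y)\<^sup>2 \<le> e" using c(2)[of f] ee c by (simp add: ennreal_le_iff)
        have "ennreal ((f y - f z)\<^sup>2 * mu y z) / 2 \<le> ennreal e" using energy_ge_term[OF step(2), of f] ee by simp
        moreover have "ennreal ((f y - f z)\<^sup>2 * mu y z) / 2 = ennreal ((f y - f z)\<^sup>2 * mu y z / 2)"
          using m by (subst divide_ennreal[symmetric]) auto
        ultimately have "(f y - f z)\<^sup>2 * mu y z / 2 \<le> e" using ee by (simp add: ennreal_le_iff)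
        hence h2: "(f y - f z)\<^sup>2 * mu y z \<le> 2 * e" by linarith
        have h3: "(f x - f z)\<^sup>2 \<le> 2 * (f x - f y)\<^sup>2 + 2 * (f y - f z)\<^sup>2"
          using sq_sum_le[of "f x - f y" "f y - f z"] by simp
        have "(f x - f y)\<^sup>2 \<le> e / c" using h1 c by (simp add: field_simps)
        moreover have "(f y - f z)\<^sup>2 \<le> 2 * e / mu y z" using h2 m by (simp add: field_simps)
        moreover have "e * (2 / c + 4 / mu y z) = 2 * (e / c) + 2 * (2 * e / mu y z)" by (simp add: field_simps)
        ultimately have "(f x - f z)\<^sup>2 \<le> e * (2 / c + 4 / mu y z)" using h3 by linarith
        hence "c' * (f x - f z)\<^sup>2 \<le> e" using c m unfolding c'_def by (simp add: field_simps)
        thus ?thesis using ee by simp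
      qed simp
    qed
  qed
qed

end

context rgraph begin

definition Ieff where "Ieff x y = (INF f\<in>{f::'a\<Rightarrow>real. f x = 1 \<and> f y = 0}. En f)"

lemma R_def': "R x y = enn2real (inverse (Ieff x y))"
  unfolding eff_res_def Ieff_def ..

lemma I_lower: "(f::'a\<Rightarrow>real) x = 1 \<Longrightarrow> f y = 0 \<Longrightarrow> Ieff x y \<le> En f"
  unfolding Ieff_def by (rule INF_lower) simp

lemma I_pos: assumes "x \<noteq> y" shows "Ieff x y > 0"
proof -
  obtain c where c: "c > 0" "\<And>f::'a\<Rightarrow>real. ennreal (c * (f x - f y)\<^sup>2) \<le> En f" using path_bound[of x y] by blast
  have "ennreal c \<le> Ieff x y" unfolding Ieff_def
  proof (rule INF_greatest)
    fix f :: "'a\<Rightarrow>real" assume "f \<in> {f. f x = 1 \<and> f y = 0}"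
    thus "ennreal c \<le> En f" using c(2)[of f] by simp
  qed
  thus ?thesis using c(1) by (metis ennreal_eq_0_iff not_le order_less_le_trans pos2 zero_less_iff_neq_zero le_less_trans)
qed

lemma I_le: assumes "x \<noteq> y" shows "Ieff x y \<le> ennreal (mx x)"
  using I_lower[of "\<lambda>w. if w = x then 1 else 0" x y] assms energy_ind by simp

lemma I_edge: assumes "E x y" shows "ennreal (mu x y / 2) \<le> Ieff x y"
  unfolding Ieff_def
proof (rule INF_greatest)
  fix f :: "'a \<Rightarrow> real" assume f: "f \<in> {f. f x = 1 \<and> f y = 0}"
  have "ennreal ((f x - f y)\<^sup>2 * mu x y) / 2 \<le> En f" by (rule energy_ge_term[OF assms])
  moreover have "ennreal ((f x - f y)\<^sup>2 * mu x y) / 2 = ennreal (mu x y / 2)"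
    using f mu_pos[OF assms] by (subst divide_ennreal[symmetric]) auto
  ultimately show "ennreal (mu x y / 2) \<le> En f" by simp
qed

lemma I_real: assumes "x \<noteq> y"
  shows "Ieff x y = ennreal (enn2real (Ieff x y))" "0 < enn2real (Ieff x y)"
    "enn2real (Ieff x y) \<le> mx x" "R x y = 1 / enn2real (Ieff x y)"
proof -
  have fin: "Ieff x y < \<infinity>" using I_le[OF assms] by (simp add: le_less_trans)
  show 1: "Ieff x y = ennreal (enn2real (Ieff x y))" using fin by simp
  show 2: "0 < enn2real (Ieff x y)" using fin I_pos[OF assms] by (simp add: enn2real_positive_iff)
  show "enn2real (Ieff x y) \<le> mx x" using I_le[OF assms] mx_pos[of x]
    by (metis "1" ennreal_le_iff less_imp_le)
  show "R x y = 1 / enn2real (Ieff x y)" unfolding R_def'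
    by (subst 1) (use 2 in \<open>simp add: inverse_ennreal divide_inverse\<close>)
qed

lemma R_xx[simp]: "R x x = 0"
proof -
  have "{f::'a\<Rightarrow>real. f x = 1 \<and> f x = 0} = {}" by auto
  thus ?thesis by (simp only: R_def' Ieff_def) simp
qed

lemma R_nonneg: "R x y \<ge> 0" unfolding R_def' by simp

lemma R_ge: assumes "x \<noteq> y" shows "1 / mx x \<le> R x y"
  using I_real[OF assms] mx_pos[of x] by (simp add: frac_le)

lemma R_pos: assumes "x \<noteq> y" shows "R x y > 0"
  using R_ge[OF assms] mx_pos[of x] by (smt (verit) divide_pos_pos)

lemma R_edge: assumes "E x y" shows "R x y \<le> 2 / mu x y"
proof -
  have xy: "x \<noteq> y" using assms E_irr by auto
  have m: "mu x y > 0" using mu_pos[OF assms] .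
  have "ennreal (mu x y / 2) \<le> ennreal (enn2real (Ieff x y))" using I_edge[OF assms] I_real(1)[OF xy] by simp
  hence "mu x y / 2 \<le> enn2real (Ieff x y)" using I_real(2)[OF xy] by (simp add: ennreal_le_iff)
  thus ?thesis unfolding I_real(4)[OF xy] using m I_real(2)[OF xy] by (simp add: field_simps)
qed

lemma R_key: assumes "En f \<noteq> \<infinity>"
  shows "(f x - f y)\<^sup>2 \<le> R x y * enn2real (En f)"
proof (cases "f x = f y")
  case True thus ?thesis using R_nonneg[of x y] by simp
next
  case False
  hence xy: "x \<noteq> y" by auto
  define c where "c = 1 / (f x - f y)"
  define k where "k = - f y / (f x - f y)"
  define g where "g = (\<lambda>u. c * f u + k)"
  have d: "f x - f y \<noteq> 0" using False by simp
  have "g x = f x / (f x - f y) - f y / (f x - f y)" by (simp add: g_def c_def k_def)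
  also have "\<dots> = (f x - f y) / (f x - f y)" by (rule diff_divide_distrib[symmetric])
  finally have "g x = 1" using d by simp
  moreover have "g y = 0" by (simp add: g_def c_def k_def)
  ultimately have "Ieff x y \<le> En g" by (rule I_lower)
  also have "En g = ennreal (c^2) * En f" unfolding g_def by (rule energy_affine)
  finally have "ennreal (enn2real (Ieff x y)) \<le> ennreal (c^2 * enn2real (En f))"
    using I_real(1)[OF xy] assms by (simp add: ennreal_mult' ennreal_enn2real_if)
  hence "enn2real (Ieff x y) \<le> c^2 * enn2real (En f)"
    by (simp add: ennreal_le_iff)
  hence "enn2real (Ieff x y) \<le> enn2real (En f) / (f x - f y)\<^sup>2"
    unfolding c_def by (simp add: power_divide)
  moreover have pos: "(f x - f y)\<^sup>2 > 0" using False by simp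
  ultimately have "(f x - f y)\<^sup>2 * enn2real (Ieff x y) \<le> enn2real (En f)"
    by (simp add: field_simps)
  thus ?thesis unfolding I_real(4)[OF xy] using I_real(2)[OF xy] by (simp add: field_simps)
qed

lemma R_sym: "R x y = R y x"
proof -
  have "Ieff x y = Ieff y x" unfolding Ieff_def
  proof (rule INF_eq)
    fix f :: "'a\<Rightarrow>real" assume f: "f \<in> {f. f x = 1 \<and> f y = 0}"
    show "\<exists>g\<in>{f. f y = 1 \<and> f x = 0}. En g \<le> En f"
      by (rule bexI[of _ "\<lambda>u. (-1) * f u + 1"]) (use f energy_affine[of "-1" f 1] in auto)
  next
    fix f :: "'a\<Rightarrow>real" assume f: "f \<in> {f. f y = 1 \<and> f x = 0}"
    show "\<exists>g\<in>{f. f x = 1 \<and> f y = 0}. En g \<le> En f"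
      by (rule bexI[of _ "\<lambda>u. (-1) * f u + 1"]) (use f energy_affine[of "-1" f 1] in auto)
  qed
  thus ?thesis unfolding R_def' by simp
qed

lemma R_tri: "R x z \<le> 2 * (R x y + R y z)"
proof (cases "x = z")
  case True thus ?thesis using R_nonneg[of x y] R_nonneg[of y z] by simp
next
  case False
  define S where "S = R x y + R y z"
  have Sp: "S > 0"
  proof (cases "x = y")
    case True thus ?thesis using R_pos[of y z] False R_nonneg[of x y] S_def by simp
  next
    case False thus ?thesis using R_pos[of x y] R_nonneg[of y z] S_def by simp
  qed
  have "ennreal (1 / (2 * S)) \<le> Ieff x z" unfolding Ieff_def
  proof (rule INF_greatest)
    fix f :: "'a\<Rightarrow>real" assume f: "f \<in> {f. f x = 1 \<and> f z = 0}"
    show "ennreal (1 / (2 * S)) \<le> En f"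
    proof (cases "En f = \<infinity>")
      case False
      define e where "e = enn2real (En f)"
      have ee: "En f = ennreal e" "e \<ge> 0" using False e_def by (auto simp: ennreal_enn2real_if)
      have "1 = (f x - f z)\<^sup>2" using f by simp
      also have "\<dots> \<le> 2 * (f x - f y)\<^sup>2 + 2 * (f y - f z)\<^sup>2"
        using sq_sum_le[of "f x - f y" "f y - f z"] by simp
      also have "\<dots> \<le> 2 * (R x y * e) + 2 * (R y z * e)"
        using R_key[OF False, of x y] R_key[OF False, of y z] e_def by simp
      also have "\<dots> = 2 * S * e" unfolding S_def by (simp add: algebra_simps)
      finally have "1 / (2 * S) \<le> e" using Sp by (simp add: field_simps)
      thus ?thesis using ee by simp
    qed simp
  qed
  moreover have "Ieff x z = ennreal (enn2real (Ieff x z))" "0 < enn2real (Ieff x z)"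
    using I_real[OF False] by auto
  ultimately have "1 / (2 * S) \<le> enn2real (Ieff x z)" by (metis ennreal_le_iff less_imp_le)
  hence "1 / enn2real (Ieff x z) \<le> 2 * S" using Sp \<open>0 < enn2real (Ieff x z)\<close>
    by (simp add: field_simps)
  thus ?thesis using I_real(4)[OF False] S_def by simp
qed

end


lemma doubling_poly:
  fixes g :: "real \<Rightarrow> real"
  assumes mono: "\<And>r s. 0 < r \<Longrightarrow> r \<le> s \<Longrightarrow> g r \<le> g s"
    and dbl: "\<And>r. r > 0 \<Longrightarrow> g (2 * r) \<le> C * g r"
    and C: "C \<ge> 2" and pos: "\<And>r. r > 0 \<Longrightarrow> g r \<ge> 0"
    and s: "0 < s" "s \<le> \<sigma>"
  shows "g \<sigma> \<le> C * (\<sigma> / s) powr (log 2 C) * g s"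
proof -
  have iter: "g (2^k * s) \<le> C^k * g s" for k
  proof (induction k)
    case 0 thus ?case by simp
  next
    case (Suc k)
    have "g (2^Suc k * s) = g (2 * (2^k * s))" by (simp add: mult.assoc)
    also have "\<dots> \<le> C * g (2^k * s)" using dbl s by simp
    also have "\<dots> \<le> C * (C^k * g s)" using Suc C by (intro mult_left_mono) auto
    finally show ?case by simp
  qed
  define L where "L = log 2 (\<sigma> / s)"
  have q: "\<sigma> / s \<ge> 1" using s by simp
  have L0: "L \<ge> 0" unfolding L_def using q by simp
  define k where "k = nat \<lceil>L\<rceil>"
  have kL: "real k \<ge> L" "real k \<le> L + 1" unfolding k_def using L0 by linarith+
  have "\<sigma> / s = 2 powr L" unfolding L_def using q by simp
  also have "\<dots> \<le> 2 powr real k" using kL by simp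
  also have "\<dots> = 2^k" by (simp add: powr_realpow)
  finally have "\<sigma> \<le> 2^k * s" using s by (simp add: field_simps)
  hence "g \<sigma> \<le> g (2^k * s)" using mono s by simp
  also have "\<dots> \<le> C^k * g s" by (rule iter)
  also have "C^k \<le> C * (\<sigma> / s) powr (log 2 C)"
  proof -
    have "C^k = 2 powr (log 2 C * k)"
      using C by (simp add: powr_powr[symmetric] powr_realpow)
    also have "\<dots> \<le> 2 powr (log 2 C * (L + 1))"
      using kL C by (intro powr_mono mult_left_mono) auto
    also have "\<dots> = 2 powr (log 2 C) * (2 powr L) powr (log 2 C)"
      by (simp add: powr_add[symmetric] powr_powr algebra_simps)
    also have "\<dots> = C * (\<sigma> / s) powr (log 2 C)"
      using C q unfolding L_def by simp
    finally show ?thesis .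
  qed
  hence "C^k * g s \<le> C * (\<sigma> / s) powr (log 2 C) * g s"
    using pos s by (intro mult_right_mono) auto
  finally show ?thesis .
qed

context rgraph begin

definition Cd0 where "Cd0 = (SOME C. \<forall>x r. r > 0 \<longrightarrow> gvol E mu R x (2 * r) \<le> ennreal C * gvol E mu R x r)"
definition Cd where "Cd = max Cd0 2"
definition gam where "gam = log 2 Cd"
definition v where "v x r = enn2real (gvol E mu R x r)"

lemma Cd2: "Cd \<ge> 2" unfolding Cd_def by simp
lemma gam1: "gam \<ge> 1" unfolding gam_def using Cd2 by simp

lemma dbl_enn: "r > 0 \<Longrightarrow> gvol E mu R x (2 * r) \<le> ennreal Cd * gvol E mu R x r"
proof -
  assume r: "r > 0"
  have "\<forall>x r. r > 0 \<longrightarrow> gvol E mu R x (2 * r) \<le> ennreal Cd0 * gvol E mu R x r"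
    unfolding Cd0_def by (rule someI_ex) (use vd in \<open>simp add: volume_doubling_def\<close>)
  hence "gvol E mu R x (2 * r) \<le> ennreal Cd0 * gvol E mu R x r" using r by blast
  also have "\<dots> \<le> ennreal Cd * gvol E mu R x r"
    unfolding Cd_def by (intro mult_right_mono ennreal_leI) auto
  finally show ?thesis .
qed

lemma gmeas_mono: "A \<subseteq> B \<Longrightarrow> gmeas E mu A \<le> gmeas E mu B"
  unfolding gmeas_def by (rule infsum_mono_set_ennreal)

lemma gmeas_finite: "finite A \<Longrightarrow> gmeas E mu A = ennreal (\<Sum>w\<in>A. mx w)"
  unfolding gmeas_def by (simp add: sum_ennreal less_imp_le[OF mx_pos])

lemma gvol_fin: "r > 0 \<Longrightarrow> gvol E mu R x r = ennreal (v x r)"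
  unfolding v_def using finv by (simp add: less_top[symmetric] ennreal_enn2real_if)

lemma v_nonneg: "v x r \<ge> 0" unfolding v_def by simp

lemma v_mono: assumes "0 < r" "r \<le> s" shows "v x r \<le> v x s"
proof -
  have "gvol E mu R x r \<le> gvol E mu R x s" unfolding gvol_def
    by (rule gmeas_mono) (use assms in \<open>auto simp: gball_def\<close>)
  thus ?thesis using gvol_fin[of r x] gvol_fin[of s x] assms v_nonneg[of x s] by (simp add: ennreal_le_iff)
qed

lemma v_ge: assumes "r > 0" shows "mx x \<le> v x r"
proof -
  have "gmeas E mu {x} \<le> gvol E mu R x r" unfolding gvol_def
    by (rule gmeas_mono) (use assms in \<open>auto simp: gball_def\<close>)
  thus ?thesis using gvol_fin[OF assms, of x] gmeas_finite[of "{x}"] v_nonneg[of x r]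
    by (simp add: ennreal_le_iff)
qed

lemma v_pos: "r > 0 \<Longrightarrow> v x r > 0" using v_ge[of r x] mx_pos[of x] by linarith

lemma v_dbl: assumes "r > 0" shows "v x (2 * r) \<le> Cd * v x r"
  using dbl_enn[OF assms, of x] gvol_fin[OF assms, of x] gvol_fin[of "2*r" x] assms Cd2 v_nonneg[of x r]
  by (simp add: ennreal_mult'[symmetric] ennreal_le_iff)

lemma v_poly: assumes "0 < s" "s \<le> \<sigma>" shows "v x \<sigma> \<le> Cd * (\<sigma> / s) powr gam * v x s"
  unfolding gam_def
  by (rule doubling_poly[where g="v x"]) (use assms v_mono v_dbl Cd2 v_nonneg in auto)

lemma ball_sub: assumes "R x y \<le> r" shows "gball R y r \<subseteq> gball R x (4 * r)"
proof
  fix w assume "w \<in> gball R y r"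
  hence "R y w < r" by (simp add: gball_def)
  moreover have "R x w \<le> 2 * (R x y + R y w)" by (rule R_tri)
  ultimately show "w \<in> gball R x (4 * r)" using assms by (simp add: gball_def)
qed

lemma v_sub: assumes "R x y \<le> r" "r > 0" shows "v y r \<le> v x (4 * r)"
proof -
  have "gvol E mu R y r \<le> gvol E mu R x (4 * r)" unfolding gvol_def
    by (rule gmeas_mono, rule ball_sub[OF assms(1)])
  thus ?thesis using gvol_fin[of r y] gvol_fin[of "4*r" x] assms v_nonneg[of x "4*r"]
    by (simp add: ennreal_le_iff)
qed

lemma v4: assumes "r > 0" shows "v x (4 * r) \<le> Cd^2 * v x r"
proof -
  have "v x (2 * (2 * r)) \<le> Cd * v x (2 * r)" using v_dbl[of "2*r" x] assms by simp
  also have "\<dots> \<le> Cd * (Cd * v x r)" using v_dbl[OF assms, of x] Cd2 by (intro mult_left_mono) auto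
  finally show ?thesis by (simp add: power2_eq_square mult.assoc)
qed

lemma ball_small: "gball R x (1 / mx x) = {x}"
proof -
  have "w \<in> gball R x (1 / mx x) \<longleftrightarrow> w = x" for w
  proof (cases "w = x")
    case True thus ?thesis using mx_pos[of x] by (simp add: gball_def)
  next
    case False thus ?thesis using R_ge[OF False[symmetric]] by (simp add: gball_def)
  qed
  thus ?thesis by auto
qed

lemma v_small: "v x (1 / mx x) = mx x"
  unfolding v_def gvol_def ball_small using gmeas_finite[of "{x}"] mx_pos[of x] by simp

lemma unbounded_from: "\<exists>w. R x w > M"
proof -
  obtain y z where yz: "R y z > 4 * max M 0" using unb by blast
  have "R y z \<le> 2 * (R y x + R x z)" by (rule R_tri)
  moreover have "M \<le> max M 0" "0 \<le> max M 0" by auto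
  ultimately have "R x y > M \<or> R x z > M" using yz R_sym[of y x]
  proof -
    assume a: "R y z \<le> 2 * (R y x + R x z)" "M \<le> max M 0" "0 \<le> max M 0" "4 * max M 0 < R y z" "R y x = R x y"
    show ?thesis
    proof (rule ccontr)
      assume "\<not> (R x y > M \<or> R x z > M)"
      hence "R x y \<le> M" "R x z \<le> M" by auto
      thus False using a by (smt (verit))
    qed
  qed
  thus ?thesis by blast
qed

lemma mx_lower: assumes "r > 0" "R x y < r"
  shows "mx y \<ge> min (v x r) ((v x r / (Cd * (4 * r) powr gam)) powr (1 / (1 + gam)))"
proof -
  have "R y x \<le> r" using assms R_sym[of x y] by simp
  hence a: "v x r \<le> v y (4 * r)" using v_sub[of y x r] assms by simp
  have my: "mx y > 0" by (rule mx_pos)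
  show ?thesis
  proof (cases "4 * r \<le> 1 / mx y")
    case True
    hence "v y (4 * r) \<le> v y (1 / mx y)" using assms by (intro v_mono) auto
    thus ?thesis using a v_small[of y] by simp
  next
    case False
    have "v y (4 * r) \<le> Cd * ((4 * r) / (1 / mx y)) powr gam * v y (1 / mx y)"
      using False my by (intro v_poly) auto
    also have "\<dots> = Cd * (4 * r) powr gam * mx y powr (1 + gam)"
      using my assms by (simp add: v_small powr_mult powr_add)
    finally have "v x r / (Cd * (4 * r) powr gam) \<le> mx y powr (1 + gam)"
      using a Cd2 assms by (simp add: field_simps)
    hence "(v x r / (Cd * (4 * r) powr gam)) powr (1 / (1 + gam)) \<le> (mx y powr (1 + gam)) powr (1 / (1 + gam))"
      using gam1 v_nonneg[of x r] Cd2 by (intro powr_mono2) auto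
    also have "\<dots> = mx y" using my gam1 by (simp add: powr_powr)
    finally show ?thesis by simp
  qed
qed

lemma ball_finite: assumes "r > 0" shows "finite (gball R x r)"
proof (rule ccontr)
  assume inf: "infinite (gball R x r)"
  define m where "m = min (v x r) ((v x r / (Cd * (4 * r) powr gam)) powr (1 / (1 + gam)))"
  have mp: "m > 0" unfolding m_def using v_pos[OF assms, of x] Cd2 assms by simp
  have "gmeas E mu (gball R x r) = \<infinity>" unfolding gmeas_def
    by (rule infsum_superconst_infinite_ennreal[where b="ennreal m"])
       (use inf mp mx_lower[OF assms] in \<open>auto simp: gball_def m_def intro!: ennreal_leI\<close>)
  moreover have "gvol E mu R x r < \<infinity>" using finv assms by blast
  ultimately show False unfolding gvol_def by simp
qed

lemma v_sum: assumes "r > 0" shows "v x r = (\<Sum>w\<in>gball R x r. mx w)"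
  unfolding v_def gvol_def using gmeas_finite[OF ball_finite[OF assms]] mx_pos
  by (simp add: sum_nonneg less_imp_le)

end


lemma sum_split_add: "(\<Sum>i<n+m. t i) = (\<Sum>i<n. t i) + (\<Sum>i<m. t (n+i)) " for t :: "nat \<Rightarrow> real"
  by (induction m) (simp_all add: add.assoc)

definition cs :: "('a \<Rightarrow> 'a \<Rightarrow> real) \<Rightarrow> (nat \<Rightarrow> 'a) \<Rightarrow> nat \<Rightarrow> real" where
  "cs \<rho> f n = (\<Sum>i<n. \<rho> (f i) (f (Suc i)))"

definition chd :: "('a \<Rightarrow> 'a \<Rightarrow> real) \<Rightarrow> 'a \<Rightarrow> 'a \<Rightarrow> real" where
  "chd \<rho> x y = Inf {cs \<rho> f n | f n. f 0 = x \<and> f n = y}"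

locale qmet =
  fixes \<rho> :: "'a \<Rightarrow> 'a \<Rightarrow> real"
  assumes nn: "\<And>x y. \<rho> x y \<ge> 0" and refl0: "\<And>x. \<rho> x x = 0"
    and sym: "\<And>x y. \<rho> x y = \<rho> y x" and pos: "\<And>x y. x \<noteq> y \<Longrightarrow> \<rho> x y > 0"
    and q3: "\<And>w x y z. \<rho> w z \<le> 2 * max (\<rho> w x) (max (\<rho> x y) (\<rho> y z))"
begin

lemma cs_nn: "cs \<rho> f n \<ge> 0" unfolding cs_def by (rule sum_nonneg) (use nn in auto)

lemma frink: "\<rho> (f 0) (f n) \<le> 2 * cs \<rho> f n"
proof (induction n arbitrary: f rule: less_induct)
  case (less n)
  show ?case
  proof (cases "n = 0")
    case True thus ?thesis by (simp add: refl0 cs_def)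
  next
    case False
    define t where "t = (\<lambda>i. \<rho> (f i) (f (Suc i)))"
    define a where "a = cs \<rho> f n"
    have a_def': "a = (\<Sum>i<n. t i)" unfolding a_def cs_def t_def ..
    have a0: "a \<ge> 0" unfolding a_def by (rule cs_nn)
    define M where "M = {m. m < n \<and> (\<Sum>i<m. t i) \<le> a / 2}"
    have M0: "0 \<in> M" using False a0 M_def by simp
    have Mf: "finite M" unfolding M_def by simp
    define m where "m = Max M"
    have mM: "m \<in> M" unfolding m_def using M0 Mf Max_in by blast
    hence mn: "m < n" and P: "(\<Sum>i<m. t i) \<le> a / 2" unfolding M_def by auto
    have split: "a = (\<Sum>i<m. t i) + t m + (\<Sum>i<n - Suc m. t (Suc m + i))"
    proof -
      have "n = Suc m + (n - Suc m)" using mn by simp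
      hence "a = (\<Sum>i<Suc m + (n - Suc m). t i)" unfolding a_def' by simp
      also have "\<dots> = (\<Sum>i<Suc m. t i) + (\<Sum>i<n - Suc m. t (Suc m + i))" by (rule sum_split_add)
      finally show ?thesis by simp
    qed
    have Q: "(\<Sum>i<n - Suc m. t (Suc m + i)) \<le> a / 2"
    proof (cases "Suc m = n")
      case True thus ?thesis using a0 by simp
    next
      case False
      hence "Suc m \<notin> M" using Mf m_def mn by (metis Max_ge Suc_n_not_le_n)
      hence "(\<Sum>i<Suc m. t i) > a / 2" using False mn M_def by auto
      thus ?thesis using split by simp
    qed
    have tm: "t m \<le> a"
    proof -
      have "t m \<le> (\<Sum>i<n. t i)" by (rule member_le_sum) (use mn nn t_def in auto)
      thus ?thesis using a_def' by simp
    qed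
    have h1: "\<rho> (f 0) (f m) \<le> a"
      using less.IH[OF mn, of f] P unfolding cs_def t_def by simp
    define g where "g = (\<lambda>i. f (Suc m + i))"
    have "\<rho> (g 0) (g (n - Suc m)) \<le> 2 * cs \<rho> g (n - Suc m)"
      by (rule less.IH) (use mn in auto)
    hence h3: "\<rho> (f (Suc m)) (f n) \<le> a"
      using Q mn unfolding g_def cs_def t_def by simp
    have "\<rho> (f 0) (f n) \<le> 2 * max (\<rho> (f 0) (f m)) (max (\<rho> (f m) (f (Suc m))) (\<rho> (f (Suc m)) (f n)))"
      by (rule q3)
    also have "\<dots> \<le> 2 * a" using h1 h3 tm t_def by simp
    finally show ?thesis unfolding a_def .
  qed
qed

abbreviation "d \<equiv> chd \<rho>"

lemma chain_ex: "cs \<rho> (\<lambda>i. if i = 0 then x else y) 1 \<in> {cs \<rho> f n | f n. f 0 = x \<and> f n = y}"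
proof -
  have "cs \<rho> (\<lambda>i. if i = 0 then x else y) 1 = cs \<rho> (\<lambda>i. if i = 0 then x else y) 1 \<and>
     (\<lambda>i. if i = 0 then x else y) 0 = x \<and> (\<lambda>i. if i = 0 then x else y) (1::nat) = y" by simp
  thus ?thesis by blast
qed

lemma bdd: "bdd_below {cs \<rho> f n | f n. f 0 = x \<and> f n = y}"
  by (rule bdd_belowI[of _ 0]) (use cs_nn in auto)

lemma d_le: "d x y \<le> \<rho> x y"
proof -
  have "d x y \<le> cs \<rho> (\<lambda>i. if i = 0 then x else y) 1"
    unfolding chd_def by (rule cInf_lower[OF chain_ex bdd])
  thus ?thesis by (simp add: cs_def)
qed

lemma d_ge: "\<rho> x y / 2 \<le> d x y"
  unfolding chd_def
proof (rule cInf_greatest)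
  show "{cs \<rho> f n | f n. f 0 = x \<and> f n = y} \<noteq> {}" using chain_ex by blast
next
  fix c assume "c \<in> {cs \<rho> f n | f n. f 0 = x \<and> f n = y}"
  then obtain f n where "c = cs \<rho> f n" "f 0 = x" "f n = y" by blast
  thus "\<rho> x y / 2 \<le> c" using frink[of f n] by simp
qed

lemma d_nn: "d x y \<ge> 0" using d_ge[of x y] nn[of x y] by linarith

lemma d_xx: "d x x = 0" using d_le[of x x] d_nn[of x x] refl0 by simp

lemma d_pos: "x \<noteq> y \<Longrightarrow> d x y > 0" using d_ge[of x y] pos[of x y] by linarith

lemma d_sym: "d x y \<le> d y x"
  unfolding chd_def[of _ y x]
proof (rule cInf_greatest)
  show "{cs \<rho> f n | f n. f 0 = y \<and> f n = x} \<noteq> {}" using chain_ex by blast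
next
  fix c assume "c \<in> {cs \<rho> f n | f n. f 0 = y \<and> f n = x}"
  then obtain f n where fn: "c = cs \<rho> f n" "f 0 = y" "f n = x" by blast
  define g where "g = (\<lambda>i. f (n - i))"
  have "cs \<rho> g n = (\<Sum>i<n. \<rho> (f (n - i)) (f (n - Suc i)))" unfolding cs_def g_def by simp
  also have "\<dots> = (\<Sum>i<n. \<rho> (f (n - Suc i)) (f (Suc (n - Suc i))))"
    by (rule sum.cong) (auto simp: sym Suc_diff_Suc)
  also have "\<dots> = cs \<rho> f n" unfolding cs_def by (rule sum.nat_diff_reindex)
  finally have "cs \<rho> g n = c" using fn by simp
  moreover have "g 0 = x" "g n = y" using fn g_def by auto
  ultimately have "c \<in> {cs \<rho> f n | f n. f 0 = x \<and> f n = y}" by blast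
  thus "d x y \<le> c" unfolding chd_def by (rule cInf_lower[OF _ bdd])
qed

lemma d_sym': "d x y = d y x" using d_sym[of x y] d_sym[of y x] by simp

lemma d_tri: "d x z \<le> d x y + d y z"
proof -
  have key: "d x z \<le> cs \<rho> f n + cs \<rho> g m" if f: "f 0 = x" "f n = y" and g: "g 0 = y" "g m = z" for f n g m
  proof -
    define h where "h = (\<lambda>i. if i \<le> n then f i else g (i - n))"
    have "cs \<rho> h (n + m) = (\<Sum>i<n. \<rho> (h i) (h (Suc i))) + (\<Sum>i<m. \<rho> (h (n+i)) (h (Suc (n+i))))"
      unfolding cs_def by (rule sum_split_add)
    also have "(\<Sum>i<n. \<rho> (h i) (h (Suc i))) = cs \<rho> f n"
      unfolding cs_def h_def by (rule sum.cong) auto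
    also have "(\<Sum>i<m. \<rho> (h (n+i)) (h (Suc (n+i)))) = cs \<rho> g m"
      unfolding cs_def h_def by (rule sum.cong) (use f g in \<open>auto simp: Suc_diff_le\<close>)
    finally have "cs \<rho> h (n + m) = cs \<rho> f n + cs \<rho> g m" .
    moreover have "h 0 = x" "h (n + m) = z" using f g h_def by auto
    ultimately have "cs \<rho> f n + cs \<rho> g m \<in> {cs \<rho> f n | f n. f 0 = x \<and> f n = z}" by (metis (mono_tags, lifting) mem_Collect_eq)
    thus ?thesis unfolding chd_def by (rule cInf_lower[OF _ bdd])
  qed
  have "d x z - d y z \<le> d x y"
    unfolding chd_def[of _ x y]
  proof (rule cInf_greatest)
    show "{cs \<rho> f n | f n. f 0 = x \<and> f n = y} \<noteq> {}" using chain_ex by blast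
  next
    fix c1 assume "c1 \<in> {cs \<rho> f n | f n. f 0 = x \<and> f n = y}"
    then obtain f n where fn: "c1 = cs \<rho> f n" "f 0 = x" "f n = y" by blast
    have "d x z - c1 \<le> d y z" unfolding chd_def[of _ y z]
    proof (rule cInf_greatest)
      show "{cs \<rho> f n | f n. f 0 = y \<and> f n = z} \<noteq> {}" using chain_ex by blast
    next
      fix c2 assume "c2 \<in> {cs \<rho> f n | f n. f 0 = y \<and> f n = z}"
      then obtain g m where "c2 = cs \<rho> g m" "g 0 = y" "g m = z" by blast
      thus "d x z - c1 \<le> c2" using key[of f n g m] fn by simp
    qed
    thus "d x z - d y z \<le> c1" by simp
  qed
  thus ?thesis by simp
qed

lemma d_metric: "is_metric d"
  unfolding is_metric_def using d_nn d_xx d_pos d_sym' d_tri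
  by (metis less_irrefl)

end


lemma phi_psi:
  fixes s :: real assumes s: "s \<ge> 0" and p: "0 < p" "p \<le> 1"
  shows "min (max s (s powr p)) ((max s (s powr p)) powr (1/p)) = s"
    and "max (min s (s powr (1/p))) ((min s (s powr (1/p))) powr p) = s"
proof -
  have pp: "p * (1/p) = 1" "(1/p) * p = 1" using p by auto
  have q1: "1/p \<ge> 1" using p by simp
  have A: "s powr p \<ge> s \<and> s powr (1/p) \<le> s" if "s \<le> 1"
  proof (cases "s = 0")
    case True thus ?thesis by simp
  next
    case False
    hence sp: "s > 0" using s by simp
    have "s powr p \<ge> s powr 1" using that sp p by (intro powr_mono') auto
    moreover have "s powr (1/p) \<le> s powr 1" using that sp q1 by (intro powr_mono') auto
    ultimately show ?thesis using sp by simp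
  qed
  have B: "s powr p \<le> s \<and> s powr (1/p) \<ge> s" if "s \<ge> 1"
  proof -
    have "s powr p \<le> s powr 1" using that p by (intro powr_mono) auto
    moreover have "s powr (1/p) \<ge> s powr 1" using that q1 by (intro powr_mono) auto
    ultimately show ?thesis using that by simp
  qed
  show "min (max s (s powr p)) ((max s (s powr p)) powr (1/p)) = s"
  proof (cases "s \<le> 1")
    case True
    hence "max s (s powr p) = s powr p" using A by simp
    thus ?thesis using A True p by (simp add: powr_powr pp s)
  next
    case False
    hence "max s (s powr p) = s" using B by simp
    thus ?thesis using B False by simp
  qed
  show "max (min s (s powr (1/p))) ((min s (s powr (1/p))) powr p) = s"
  proof (cases "s \<le> 1")
    case True
    hence "min s (s powr (1/p)) = s powr (1/p)" using A by simp
    thus ?thesis using A True p by (simp add: powr_powr pp s)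
  next
    case False
    hence "min s (s powr (1/p)) = s" using B by simp
    thus ?thesis using B False by simp
  qed
qed

lemma theta_homeo:
  fixes A \<beta> p :: real
  assumes A: "A > 0" and b: "\<beta> > 0" and p: "0 < p" "p \<le> 1"
  shows "homeomorphism {0::real..} {0..} (\<lambda>t. max (A * t powr \<beta>) ((A * t powr \<beta>) powr p))
           (\<lambda>w. (min w (w powr (1/p)) / A) powr (1/\<beta>))"
proof (rule homeomorphismI)
  show "continuous_on {0::real..} (\<lambda>t. max (A * t powr \<beta>) ((A * t powr \<beta>) powr p))"
    using A b p by (intro continuous_on_max continuous_on_mult continuous_on_const continuous_on_powr' continuous_on_id) auto
  show "continuous_on {0::real..} (\<lambda>w. (min w (w powr (1/p)) / A) powr (1/\<beta>))"
    using A b p by (intro continuous_on_divide continuous_on_min continuous_on_mult continuous_on_const continuous_on_powr' continuous_on_id) auto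
  show "(\<lambda>t. max (A * t powr \<beta>) ((A * t powr \<beta>) powr p)) ` {0..} \<subseteq> {0..}" using A by (auto simp: le_max_iff_disj)
  show "(\<lambda>w. (min w (w powr (1/p)) / A) powr (1/\<beta>)) ` {0..} \<subseteq> {0..}" by auto
  show "(min (max (A * t powr \<beta>) ((A * t powr \<beta>) powr p)) (max (A * t powr \<beta>) ((A * t powr \<beta>) powr p) powr (1/p)) / A) powr (1/\<beta>) = t"
    if "t \<in> {0..}" for t
  proof -
    have "min (max (A * t powr \<beta>) ((A * t powr \<beta>) powr p)) (max (A * t powr \<beta>) ((A * t powr \<beta>) powr p) powr (1/p)) = A * t powr \<beta>"
      by (rule phi_psi(1)) (use A p in auto)
    thus ?thesis using A b that by (simp add: powr_powr)
  qed
  show "max (A * ((min w (w powr (1/p)) / A) powr (1/\<beta>)) powr \<beta>) ((A * ((min w (w powr (1/p)) / A) powr (1/\<beta>)) powr \<beta>) powr p) = w"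
    if "w \<in> {0..}" for w
  proof -
    have "A * ((min w (w powr (1/p)) / A) powr (1/\<beta>)) powr \<beta> = min w (w powr (1/p))"
      using A b that by (simp add: powr_powr)
    thus ?thesis using phi_psi(2)[of w p] that p by simp
  qed
qed


lemma max_powr: fixes a b e :: real assumes "0 \<le> a" "0 \<le> b" "e > 0" shows "(max a b) powr e = max (a powr e) (b powr e)"
proof (cases "a \<le> b")
  case True
  hence "a powr e \<le> b powr e" using assms by (intro powr_mono2) auto
  thus ?thesis using True by (simp add: max_absorb2)
next
  case False
  hence "b powr e \<le> a powr e" using assms by (intro powr_mono2) auto
  thus ?thesis using False by (simp add: max_absorb1)
qed

context rgraph begin

definition h where "h x \<sigma> = \<sigma> * v x \<sigma>"
definition D where "D x y = R x y * (v x (R x y) + v y (R x y))"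
definition K1 where "K1 = 1 + Cd^2"
definition K where "K = 4 * K1 * Cd^2"
definition eps where "eps = 1 / (2 * log 2 K)"
definition beta where "beta = 2 * log 2 K"
definition rho where "rho x y = D x y powr eps"

lemma Cd_sq: "Cd^2 \<ge> 4"
proof -
  have "(2::real)^2 \<le> Cd^2" using Cd2 by (intro power_mono) auto
  thus ?thesis by simp
qed
lemma K1_ge: "K1 \<ge> 5" unfolding K1_def using Cd_sq by simp
lemma K_ge: "K \<ge> 80"
proof -
  have "4 * 5 * 4 \<le> 4 * K1 * Cd^2" using K1_ge Cd_sq by (intro mult_mono) auto
  thus ?thesis unfolding K_def by simp
qed
lemma eps_pos: "eps > 0" unfolding eps_def using K_ge by simp
lemma beta_ge: "beta \<ge> 2" unfolding beta_def using K_ge by simp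
lemma eps_beta: "eps * beta = 1"
proof -
  have "log 2 K > 0" using K_ge by simp
  thus ?thesis unfolding eps_def beta_def by simp
qed

lemma h_nn: "\<sigma> \<ge> 0 \<Longrightarrow> h x \<sigma> \<ge> 0" unfolding h_def using v_nonneg by simp
lemma h_mono: assumes "0 \<le> a" "a \<le> b" shows "h x a \<le> h x b"
proof (cases "a = 0")
  case True thus ?thesis using h_nn assms by (simp add: h_def)
next
  case False
  thus ?thesis unfolding h_def using assms v_mono[of a b x] v_nonneg[of x a]
    by (intro mult_mono) auto
qed

lemma D_sym: "D x y = D y x" unfolding D_def using R_sym[of x y] by (simp add: add.commute)
lemma D_xx[simp]: "D x x = 0" unfolding D_def by simp
lemma D_nn: "D x y \<ge> 0" unfolding D_def using R_nonneg v_nonneg by simp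
lemma D_lower: "h x (R x y) \<le> D x y"
  unfolding D_def h_def using R_nonneg[of x y] v_nonneg[of y "R x y"] by (simp add: distrib_left)

lemma D_upper: "D x y \<le> K1 * h x (R x y)"
proof (cases "x = y")
  case True thus ?thesis by (simp add: h_def)
next
  case False
  have r: "R x y > 0" using R_pos[OF False] .
  have "v y (R x y) \<le> v x (4 * R x y)" using v_sub[of x y "R x y"] r by simp
  also have "\<dots> \<le> Cd^2 * v x (R x y)" using v4[OF r] .
  finally have "v x (R x y) + v y (R x y) \<le> K1 * v x (R x y)" unfolding K1_def by (simp add: algebra_simps)
  thus ?thesis unfolding D_def h_def using r by (simp add: mult_left_mono)
qed

lemma h_ge: assumes "x \<noteq> y" shows "h x (R x y) \<ge> R x y * mx x"
  unfolding h_def using v_ge[OF R_pos[OF assms], of x] R_nonneg[of x y] by (simp add: mult_left_mono)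

lemma D_ge1: assumes "x \<noteq> y" shows "D x y \<ge> 1"
proof -
  have "1 = (1 / mx x) * mx x" using mx_pos[of x] by simp
  also have "\<dots> \<le> R x y * mx x" using R_ge[OF assms] mx_pos[of x] by (simp add: divide_le_eq)
  also have "\<dots> \<le> h x (R x y)" by (rule h_ge[OF assms])
  also have "\<dots> \<le> D x y" by (rule D_lower)
  finally show ?thesis .
qed

lemma D_quasi_aux: assumes "R y z \<le> R x y" shows "D x z \<le> K * D x y"
proof (cases "x = y")
  case True
  hence "R y z \<le> 0" using assms by simp
  hence "y = z" using R_pos by (metis not_le)
  thus ?thesis using True K_ge by simp
next
  case False
  define a where "a = R x y"
  have a: "a > 0" using R_pos[OF False] a_def by simp
  have "R x z \<le> 2 * (R x y + R y z)" by (rule R_tri)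
  hence xz: "R x z \<le> 4 * a" using assms a_def by simp
  have "D x z \<le> K1 * h x (R x z)" by (rule D_upper)
  also have "\<dots> \<le> K1 * h x (4 * a)" using K1_ge xz R_nonneg[of x z] by (intro mult_left_mono h_mono) auto
  also have "\<dots> = K1 * 4 * a * v x (4 * a)" by (simp add: h_def)
  also have "\<dots> \<le> K1 * 4 * a * (Cd^2 * v x a)" using K1_ge a v4[OF a, of x] by (intro mult_left_mono) auto
  also have "\<dots> = K * h x a" by (simp add: K_def h_def)
  also have "\<dots> \<le> K * D x y" unfolding a_def using K_ge D_lower by (intro mult_left_mono) auto
  finally show ?thesis .
qed

lemma D_quasi: "D x z \<le> K * max (D x y) (D y z)"
proof (cases "R y z \<le> R x y")
  case True
  hence "D x z \<le> K * D x y" by (rule D_quasi_aux)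
  thus ?thesis using K_ge by (smt (verit) max.cobounded1 mult_left_mono)
next
  case False
  hence "R y x \<le> R z y" using R_sym by (metis less_le_not_le nle_le)
  hence "D z x \<le> K * D z y" by (rule D_quasi_aux)
  thus ?thesis using K_ge D_sym[of z x] D_sym[of z y] by (smt (verit) max.cobounded2 mult_left_mono)
qed

lemma D_q3: "D w z \<le> K^2 * max (D w x) (max (D x y) (D y z))"
proof -
  define M where "M = max (D x y) (D y z)"
  have K0: "K \<ge> 1" using K_ge by simp
  have M0: "M \<ge> 0" unfolding M_def using D_nn[of x y] by simp
  have "D w z \<le> K * max (D w x) (D x z)" by (rule D_quasi)
  also have "\<dots> \<le> K * max (D w x) (K * M)"
    unfolding M_def using K0 by (intro mult_left_mono max.mono D_quasi) auto
  also have "\<dots> \<le> K * (K * max (D w x) M)"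
  proof -
    have mm: "max (D w x) M \<ge> 0" using M0 by simp
    have "D w x \<le> max (D w x) M" by simp
    also have "\<dots> = 1 * max (D w x) M" by simp
    also have "\<dots> \<le> K * max (D w x) M" using K0 mm by (intro mult_right_mono) auto
    finally have a: "D w x \<le> K * max (D w x) M" .
    have b: "K * M \<le> K * max (D w x) M" using K0 by (intro mult_left_mono) auto
    have "max (D w x) (K * M) \<le> K * max (D w x) M" using a b by simp
    thus ?thesis using K0 by (intro mult_left_mono) auto
  qed
  finally show ?thesis unfolding M_def by (simp add: power2_eq_square mult.assoc)
qed

lemma K2_eps: "(K^2) powr eps = 2"
proof -
  have k2: "K^2 = K powr 2" using K_ge by simp
  have "(K^2) powr eps = K powr (2 * eps)" by (simp only: k2 powr_powr)
  also have "2 * eps = ln 2 / ln K" unfolding eps_def log_def using K_ge by simp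
  also have "K powr (ln 2 / ln K) = exp (ln 2 / ln K * ln K)" using K_ge by (simp add: powr_def)
  also have "\<dots> = 2" using K_ge by simp
  finally show ?thesis .
qed

lemma rho_qmet: "qmet rho"
proof
  show "\<And>x y. 0 \<le> rho x y" unfolding rho_def by simp
  show "\<And>x. rho x x = 0" unfolding rho_def by simp
  show "\<And>x y. rho x y = rho y x" unfolding rho_def using D_sym by simp
  show "\<And>x y. x \<noteq> y \<Longrightarrow> 0 < rho x y" unfolding rho_def using D_ge1 by (smt (verit) powr_gt_zero)
  fix w x y z
  have "rho w z \<le> (K^2 * max (D w x) (max (D x y) (D y z))) powr eps"
    unfolding rho_def using D_q3 D_nn eps_pos by (intro powr_mono2) auto
  also have "\<dots> = 2 * (max (D w x) (max (D x y) (D y z))) powr eps"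
    using K_ge D_nn by (simp add: powr_mult K2_eps)
  also have "\<dots> = 2 * max (rho w x) (max (rho x y) (rho y z))"
  proof -
    have "max (D w x) (max (D x y) (D y z)) powr eps = max (D w x powr eps) (max (D x y) (D y z) powr eps)"
      using D_nn[of w x] D_nn[of x y] eps_pos by (intro max_powr) auto
    also have "max (D x y) (D y z) powr eps = max (D x y powr eps) (D y z powr eps)"
      using D_nn[of y z] D_nn[of x y] eps_pos by (intro max_powr) auto
    finally show ?thesis unfolding rho_def by simp
  qed
  finally show "rho w z \<le> 2 * max (rho w x) (max (rho x y) (rho y z))" .
qed

sublocale qm: qmet rho by (rule rho_qmet)

abbreviation "dd \<equiv> chd rho"

lemma rho_beta: "rho x y powr beta = D x y"
  unfolding rho_def using D_nn by (simp add: powr_powr eps_beta)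

lemma dd_beta_le: "dd x y powr beta \<le> D x y"
  using qm.d_le[of x y] qm.d_nn[of x y] rho_beta[of x y] beta_ge by (metis powr_mono2 order.trans less_le_trans zero_less_numeral le_less)

lemma D_le_dd: "D x y \<le> 2 powr beta * dd x y powr beta"
proof -
  have "D x y = rho x y powr beta" by (simp add: rho_beta)
  also have "\<dots> \<le> (2 * dd x y) powr beta"
    using qm.d_ge[of x y] qm.nn[of x y] beta_ge by (intro powr_mono2) auto
  also have "\<dots> = 2 powr beta * dd x y powr beta" using qm.d_nn by (simp add: powr_mult)
  finally show ?thesis .
qed

lemma dd_ball_sub: assumes "r > 0" shows "gball dd x r \<subseteq> {w. D x w < (2 * r) powr beta}"
proof
  fix w assume "w \<in> gball dd x r"
  hence "dd x w < r" by (simp add: gball_def)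
  hence "rho x w < 2 * r" using qm.d_ge[of x w] by simp
  hence "rho x w powr beta < (2 * r) powr beta" using qm.nn beta_ge by (intro powr_less_mono2) auto
  thus "w \<in> {w. D x w < (2 * r) powr beta}" using rho_beta by simp
qed

lemma dd_ball_sup: assumes "r > 0" shows "{w. D x w < r powr beta} \<subseteq> gball dd x r"
proof
  fix w assume "w \<in> {w. D x w < r powr beta}"
  hence "D x w < r powr beta" by simp
  hence "D x w powr eps < (r powr beta) powr eps" using D_nn eps_pos by (intro powr_less_mono2) auto
  hence "rho x w < r" unfolding rho_def using assms by (simp add: powr_powr mult.commute[of beta] eps_beta)
  thus "w \<in> gball dd x r" using qm.d_le[of x w] by (simp add: gball_def)
qed

lemma Dset_sub: assumes "t > 0" shows "{w. D x w < t} \<subseteq> gball R x (t / mx x)"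
proof
  fix w assume w: "w \<in> {w. D x w < t}"
  show "w \<in> gball R x (t / mx x)"
  proof (cases "w = x")
    case True thus ?thesis using assms mx_pos[of x] by (simp add: gball_def)
  next
    case False
    have "R x w * mx x \<le> D x w" using h_ge[of x w] False D_lower[of x w] by simp
    hence "R x w * mx x < t" using w by simp
    thus ?thesis using mx_pos[of x] by (simp add: gball_def field_simps)
  qed
qed

lemma Dset_fin: "finite {w. D x w < t}"
proof (cases "t > 0")
  case True thus ?thesis using Dset_sub[OF True] ball_finite[of "t / mx x" x] mx_pos[of x]
    by (meson divide_pos_pos finite_subset)
next
  case False thus ?thesis using D_nn by (simp add: not_less) (metis (no_types, lifting) empty_Collect_eq finite.emptyI not_le order_trans)
qed

lemma dd_ball_fin: "r > 0 \<Longrightarrow> finite (gball dd x r)"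
  using dd_ball_sub Dset_fin finite_subset by metis

lemma dd_ball_fin': "finite (gball dd x r)"
proof (cases "r > 0")
  case True thus ?thesis by (rule dd_ball_fin)
next
  case False
  hence "gball dd x r = {}" using qm.d_nn by (auto simp: gball_def not_less intro: order_trans)
  thus ?thesis by simp
qed

definition vol where "vol A = (\<Sum>w\<in>A. mx w)"

lemma vol_mono: "finite B \<Longrightarrow> A \<subseteq> B \<Longrightarrow> vol A \<le> vol B"
  unfolding vol_def by (rule sum_mono2) (auto intro: less_imp_le mx_pos)

lemma vol_nn: "vol A \<ge> 0" unfolding vol_def by (rule sum_nonneg) (auto intro: less_imp_le mx_pos)

lemma gvol_dd: "gvol E mu dd x r = ennreal (vol (gball dd x r))"
  unfolding gvol_def vol_def using gmeas_finite[OF dd_ball_fin'] .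

lemma v_vol: "r > 0 \<Longrightarrow> v x r = vol (gball R x r)"
  unfolding vol_def by (rule v_sum)

end

context rgraph begin

definition Lam where "Lam = 2 * 2 powr beta * K1"

lemma Lam_ge: "Lam \<ge> 1"
proof -
  have "2 powr beta \<ge> 1" using beta_ge by (intro ge_one_powr_ge_zero) auto
  hence "1 * 1 \<le> (2 * 2 powr beta) * K1" using K1_ge by (intro mult_mono) auto
  thus ?thesis unfolding Lam_def by simp
qed

lemma C3_upper: assumes xy: "x \<noteq> y"
  shows "R x y * vol (gball dd x (dd x y)) \<le> (Cd * Lam powr gam * 2 powr beta) * dd x y powr beta"
proof -
  define r where "r = R x y"
  define t where "t = dd x y"
  have r: "r > 0" using R_pos[OF xy] r_def by simp
  have t: "t > 0" using qm.d_pos[OF xy] t_def by simp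
  have hr: "h x r \<ge> 0" using h_nn r by simp
  have sub: "gball dd x t \<subseteq> gball R x (Lam * r)"
  proof
    fix w assume "w \<in> gball dd x t"
    hence "w \<in> {w. D x w < (2 * t) powr beta}" using dd_ball_sub[OF t] by blast
    hence "D x w < (2 * t) powr beta" by simp
    also have "\<dots> = 2 powr beta * t powr beta" using t by (simp add: powr_mult)
    also have "\<dots> \<le> 2 powr beta * D x y" unfolding t_def using dd_beta_le by simp
    also have "\<dots> \<le> 2 powr beta * (K1 * h x r)" unfolding r_def using D_upper by simp
    finally have Dw: "D x w < 2 powr beta * K1 * h x r" by (simp add: mult.assoc)
    show "w \<in> gball R x (Lam * r)"
    proof (rule ccontr)
      assume "w \<notin> gball R x (Lam * r)"
      hence "R x w \<ge> Lam * r" by (simp add: gball_def)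
      hence "h x (Lam * r) \<le> h x (R x w)" using Lam_ge r by (intro h_mono) auto
      also have "\<dots> \<le> D x w" by (rule D_lower)
      finally have a: "h x (Lam * r) \<le> D x w" .
      have "v x r \<le> v x (Lam * r)" using Lam_ge r by (intro v_mono) auto
      hence "Lam * h x r \<le> h x (Lam * r)" unfolding h_def using Lam_ge r
        by (simp add: mult.assoc mult_left_mono)
      moreover have "2 powr beta * K1 * h x r \<le> Lam * h x r"
        unfolding Lam_def using hr K1_ge by (simp add: mult_right_mono)
      ultimately show False using a Dw by linarith
    qed
  qed
  have "vol (gball dd x t) \<le> vol (gball R x (Lam * r))"
    using sub ball_finite[of "Lam * r" x] Lam_ge r by (intro vol_mono) auto
  also have "\<dots> = v x (Lam * r)" using v_vol[of "Lam * r" x] Lam_ge r by simp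
  also have "\<dots> \<le> Cd * ((Lam * r) / r) powr gam * v x r" using Lam_ge r by (intro v_poly) auto
  also have "\<dots> = Cd * Lam powr gam * v x r" using r by simp
  finally have vb: "vol (gball dd x t) \<le> Cd * Lam powr gam * v x r" .
  have "r * vol (gball dd x t) \<le> r * (Cd * Lam powr gam * v x r)" using vb r by (intro mult_left_mono) auto
  also have "\<dots> = Cd * Lam powr gam * h x r" by (simp add: h_def)
  also have "\<dots> \<le> Cd * Lam powr gam * D x y" unfolding r_def using D_lower Cd2 by (intro mult_left_mono) auto
  also have "\<dots> \<le> Cd * Lam powr gam * (2 powr beta * t powr beta)" unfolding t_def using D_le_dd Cd2 by (intro mult_left_mono) auto
  finally show ?thesis unfolding r_def t_def by (simp add: mult.assoc)
qed

lemma C3_lower: assumes xy: "x \<noteq> y"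
  shows "(1 / (K1 * Cd * Lam powr gam)) * dd x y powr beta \<le> R x y * vol (gball dd x (dd x y))"
proof -
  define r where "r = R x y"
  define t where "t = dd x y"
  define \<delta> where "\<delta> = 1 / Lam"
  have r: "r > 0" using R_pos[OF xy] r_def by simp
  have t: "t > 0" using qm.d_pos[OF xy] t_def by simp
  have dl: "0 < \<delta>" "\<delta> \<le> 1" using Lam_ge unfolding \<delta>_def by auto
  have hr: "h x r \<ge> 0" using h_nn r by simp
  have tb: "t powr beta > 0" using t by simp
  have sub: "gball R x (\<delta> * r) \<subseteq> gball dd x t"
  proof
    fix w assume "w \<in> gball R x (\<delta> * r)"
    hence w: "R x w < \<delta> * r" by (simp add: gball_def)
    have "D x w \<le> K1 * h x (R x w)" by (rule D_upper)
    also have "\<dots> \<le> K1 * h x (\<delta> * r)" using w R_nonneg[of x w] K1_ge by (intro mult_left_mono h_mono) auto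
    also have "h x (\<delta> * r) \<le> \<delta> * h x r"
      unfolding h_def using v_mono[of "\<delta> * r" r x] dl r v_nonneg[of x "\<delta> * r"]
      by (simp add: mult.assoc mult_left_mono)
    hence "K1 * h x (\<delta> * r) \<le> K1 * (\<delta> * h x r)" using K1_ge by (intro mult_left_mono) auto
    also have "\<dots> \<le> K1 * (\<delta> * D x y)" unfolding r_def using D_lower K1_ge dl by (intro mult_left_mono) auto
    also have "\<dots> \<le> K1 * (\<delta> * (2 powr beta * t powr beta))" unfolding t_def using D_le_dd K1_ge dl by (intro mult_left_mono) auto
    also have "\<dots> = t powr beta / 2" unfolding \<delta>_def Lam_def using K1_ge by (simp add: field_simps)
    finally have "D x w \<le> t powr beta / 2" .
    hence "D x w < t powr beta" using tb by linarith
    thus "w \<in> gball dd x t" using dd_ball_sup[OF t] by blast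
  qed
  have "v x r \<le> Cd * (r / (\<delta> * r)) powr gam * v x (\<delta> * r)" using dl r by (intro v_poly) (auto simp: mult_le_cancel_right1)
  also have "r / (\<delta> * r) = Lam" unfolding \<delta>_def using r Lam_ge by simp
  finally have a: "v x r \<le> Cd * Lam powr gam * v x (\<delta> * r)" .
  have "v x (\<delta> * r) = vol (gball R x (\<delta> * r))" using v_vol dl r by simp
  also have "\<dots> \<le> vol (gball dd x t)" using sub by (intro vol_mono dd_ball_fin t)
  finally have b: "v x r \<le> Cd * Lam powr gam * vol (gball dd x t)" using a Cd2
    by (smt (verit) mult_left_mono powr_ge_zero mult_nonneg_nonneg)
  have "t powr beta \<le> D x y" unfolding t_def by (rule dd_beta_le)
  also have "\<dots> \<le> K1 * h x r" unfolding r_def by (rule D_upper)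
  also have "\<dots> = K1 * (r * v x r)" by (simp add: h_def)
  also have "\<dots> \<le> K1 * (r * (Cd * Lam powr gam * vol (gball dd x t)))"
    using b r K1_ge by (intro mult_left_mono) auto
  finally have "t powr beta \<le> (K1 * Cd * Lam powr gam) * (r * vol (gball dd x t))" by (simp add: ac_simps)
  moreover have "K1 * Cd * Lam powr gam > 0" using K1_ge Cd2 Lam_ge by simp
  ultimately show ?thesis unfolding r_def t_def by (simp add: field_simps)
qed

end

context rgraph begin

definition Aq where "Aq = K1 * Cd * 2 powr beta"

lemma qs_bound: assumes xz: "x \<noteq> z"
  shows "R x y / R x z \<le> max (Aq * (dd x y / dd x z) powr beta) ((Aq * (dd x y / dd x z) powr beta) powr (1/(1+gam)))"
proof (cases "y = x")
  case True
  have "0 \<le> Aq * (dd x y / dd x z) powr beta" unfolding Aq_def using K1_ge Cd2 by simp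
  thus ?thesis using True by simp
next
  case False
  hence xy: "x \<noteq> y" by simp
  define ry rz ty tz where "ry = R x y" and "rz = R x z" and "ty = dd x y" and "tz = dd x z"
  define u tq where "u = ry / rz" and "tq = ty / tz"
  have pos: "ry > 0" "rz > 0" "ty > 0" "tz > 0"
    using R_pos[OF xy] R_pos[OF xz] qm.d_pos[OF xy] qm.d_pos[OF xz] ry_def rz_def ty_def tz_def by auto
  have up: "u > 0" unfolding u_def using pos by simp
  define vy vz where "vy = v x ry" and "vz = v x rz"
  have vpos: "vy > 0" "vz > 0" using v_pos pos vy_def vz_def by auto
  have Dz1: "D x z > 0" using D_ge1[OF xz] by simp
  have Dy: "ry * vy \<le> D x y" using D_lower[of x y] unfolding h_def ry_def vy_def .
  have Dz: "D x z \<le> K1 * (rz * vz)" using D_upper[of x z] unfolding h_def rz_def vz_def .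
  have Pb: "D x y / D x z \<le> 2 powr beta * tq powr beta"
  proof -
    have "tz powr beta \<le> D x z" unfolding tz_def by (rule dd_beta_le)
    moreover have "D x y \<le> 2 powr beta * ty powr beta" unfolding ty_def by (rule D_le_dd)
    moreover have "tz powr beta > 0" using pos by simp
    ultimately have "D x y / D x z \<le> 2 powr beta * ty powr beta / tz powr beta"
      using Dz1 by (intro frac_le) auto
    also have "\<dots> = 2 powr beta * tq powr beta" unfolding tq_def using pos by (simp add: powr_divide)
    finally show ?thesis .
  qed
  have tqb: "0 \<le> tq powr beta" by simp
  show ?thesis
  proof (cases "rz \<le> ry")
    case True
    have "vz \<le> vy" unfolding vz_def vy_def using True pos by (intro v_mono) auto
    have "u * D x z \<le> u * (K1 * (rz * vz))" using Dz up by (intro mult_left_mono) auto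
    also have "\<dots> = K1 * (ry * vz)" unfolding u_def using pos by simp
    also have "\<dots> \<le> K1 * (ry * vy)" using \<open>vz \<le> vy\<close> pos K1_ge by (intro mult_left_mono) auto
    also have "\<dots> \<le> K1 * D x y" using Dy K1_ge by (intro mult_left_mono) auto
    finally have "u \<le> K1 * D x y / D x z" using Dz1 by (simp add: pos_le_divide_eq)
    also have "\<dots> = K1 * (D x y / D x z)" by simp
    also have "\<dots> \<le> K1 * (2 powr beta * tq powr beta)" using Pb K1_ge by (intro mult_left_mono) auto
    also have "\<dots> = 1 * (K1 * 2 powr beta * tq powr beta)" by simp
    also have "\<dots> \<le> Cd * (K1 * 2 powr beta * tq powr beta)" using K1_ge Cd2 tqb by (intro mult_right_mono) auto
    also have "\<dots> = Aq * tq powr beta" unfolding Aq_def by simp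
    finally show ?thesis unfolding u_def tq_def ry_def rz_def ty_def tz_def by simp
  next
    case False
    have "vz \<le> Cd * (rz / ry) powr gam * vy" unfolding vz_def vy_def using False pos by (intro v_poly) auto
    also have "(rz / ry) powr gam = 1 / u powr gam" unfolding u_def using pos by (simp add: powr_divide)
    finally have "vz \<le> Cd * vy / u powr gam" by simp
    hence vzb: "vz * u powr gam \<le> Cd * vy" using up by (simp add: pos_le_divide_eq)
    have upg: "u powr (1 + gam) = u * u powr gam" using up by (simp add: powr_add)
    have "u powr (1 + gam) * D x z \<le> u powr (1 + gam) * (K1 * (rz * vz))" using Dz by (intro mult_left_mono) auto
    also have "\<dots> = K1 * (u * rz) * (vz * u powr gam)" unfolding upg by (simp add: ac_simps)
    also have "u * rz = ry" unfolding u_def using pos by simp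
    also have "K1 * ry * (vz * u powr gam) \<le> K1 * ry * (Cd * vy)" using vzb K1_ge pos by (intro mult_left_mono) auto
    also have "\<dots> = (K1 * Cd) * (ry * vy)" by (simp add: ac_simps)
    also have "\<dots> \<le> (K1 * Cd) * D x y" using Dy K1_ge Cd2 by (intro mult_left_mono) auto
    finally have "u powr (1 + gam) \<le> K1 * Cd * D x y / D x z" using Dz1 by (simp add: pos_le_divide_eq)
    also have "\<dots> = K1 * Cd * (D x y / D x z)" by simp
    also have "\<dots> \<le> K1 * Cd * (2 powr beta * tq powr beta)" using Pb K1_ge Cd2 by (intro mult_left_mono) auto
    also have "\<dots> = Aq * tq powr beta" unfolding Aq_def by simp
    finally have "(u powr (1 + gam)) powr (1/(1+gam)) \<le> (Aq * tq powr beta) powr (1/(1+gam))"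
      using gam1 by (intro powr_mono2) auto
    moreover have "(u powr (1 + gam)) powr (1/(1+gam)) = u" using gam1 up by (simp add: powr_powr)
    ultimately show ?thesis unfolding u_def tq_def ry_def rz_def ty_def tz_def by simp
  qed
qed

lemma C2: "quasisymmetric_to dd R"
  unfolding quasisymmetric_to_def
proof (intro exI conjI allI impI)
  show "homeomorphism {0::real..} {0..} (\<lambda>t. max (Aq * t powr beta) ((Aq * t powr beta) powr (1/(1+gam))))
           (\<lambda>w. (min w (w powr (1/(1/(1+gam)))) / Aq) powr (1/beta))"
    by (rule theta_homeo) (use K1_ge Cd2 beta_ge gam1 in \<open>auto simp: Aq_def\<close>)
  fix x y z :: 'a assume "x \<noteq> z"
  thus "R x y / R x z \<le> max (Aq * (dd x y / dd x z) powr beta) ((Aq * (dd x y / dd x z) powr beta) powr (1/(1+gam)))"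
    by (rule qs_bound)
qed

lemma C5: "Inf {dd x y | x y. x \<noteq> y} > 0"
proof -
  obtain a b :: 'a where ab: "a \<noteq> b" using inf by (metis UNIV_eq_I finite.emptyI finite_insert insertCI)
  have "1/2 \<le> Inf {dd x y | x y. x \<noteq> y}"
  proof (rule cInf_greatest)
    show "{dd x y | x y. x \<noteq> y} \<noteq> {}" using ab by blast
  next
    fix c assume "c \<in> {dd x y | x y. x \<noteq> y}"
    then obtain x y where c: "c = dd x y" "x \<noteq> y" by blast
    have "1 \<le> D x y" using D_ge1[OF c(2)] .
    hence "1 powr eps \<le> rho x y" unfolding rho_def using eps_pos by (intro powr_mono2) auto
    hence "1 \<le> rho x y" by simp
    thus "1/2 \<le> c" using qm.d_ge[of x y] c by simp
  qed
  thus ?thesis by simp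
qed

lemma C6: "\<exists>Cp>0. \<forall>x y. E x y \<longrightarrow> dd x y \<le> Cp"
proof -
  obtain p0 where p0: "p0 > 0" "\<And>x y. E x y \<Longrightarrow> mu x y / mx x \<ge> p0" using p0c unfolding p0_cond_def by blast
  define L where "L = 2 / p0"
  define B where "B = K1 * L * Cd * L powr gam"
  have Lp: "L > 0" using p0 L_def by simp
  have Bp: "B > 0" unfolding B_def using Lp K1_ge Cd2 by simp
  show ?thesis
  proof (intro exI[of _ "B powr eps"] conjI allI impI)
    show "B powr eps > 0" using Bp by simp
    fix x y assume e: "E x y"
    have m: "mx x > 0" by (rule mx_pos)
    have mu: "mu x y > 0" using mu_pos[OF e] .
    have pm: "p0 * mx x \<le> mu x y" using p0(2)[OF e] m by (simp add: field_simps)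
    have "p0 * mx x \<le> 1 * mx x" using pm mu_le_mx[OF e] by simp
    hence p1: "p0 \<le> 1" using m by (rule mult_right_le_imp_le)
    have L2: "L \<ge> 1" unfolding L_def using p0 p1 by simp
    have "R x y \<le> 2 / mu x y" by (rule R_edge[OF e])
    also have "\<dots> \<le> 2 / (p0 * mx x)" using pm p0 m mu by (intro divide_left_mono) auto
    also have "\<dots> = L / mx x" unfolding L_def by simp
    finally have rL: "R x y \<le> L / mx x" .
    have vb: "v x (L / mx x) \<le> Cd * L powr gam * mx x"
    proof -
      have "v x (L / mx x) \<le> Cd * ((L / mx x) / (1 / mx x)) powr gam * v x (1 / mx x)"
        using m L2 by (intro v_poly) (auto simp: divide_right_mono)
      also have "\<dots> = Cd * L powr gam * mx x" using m by (simp add: v_small)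
      finally show ?thesis .
    qed
    have "D x y \<le> K1 * h x (R x y)" by (rule D_upper)
    also have "\<dots> \<le> K1 * h x (L / mx x)" using rL R_nonneg[of x y] K1_ge by (intro mult_left_mono h_mono) auto
    also have "\<dots> = K1 * (L / mx x) * v x (L / mx x)" by (simp add: h_def)
    also have "\<dots> \<le> K1 * (L / mx x) * (Cd * L powr gam * mx x)"
      using vb K1_ge Lp m by (intro mult_left_mono) auto
    also have "\<dots> = B" unfolding B_def using m by (simp add: field_simps)
    finally have "D x y \<le> B" .
    hence "rho x y \<le> B powr eps" unfolding rho_def using D_nn eps_pos by (intro powr_mono2) auto
    thus "dd x y \<le> B powr eps" using qm.d_le[of x y] by simp
  qed
qed

end

context rgraph begin

definition th where "th = gam / (1 + gam)"
definition Cg where "Cg = Cd * max 1 (Cd powr (1/(1+gam)) * (2*K1*Cd) powr th)"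

lemma th_bounds: "0 < th" "th < 1" unfolding th_def using gam1 by auto

lemma u_bound:
  fixes u T c q :: real
  assumes u: "u > 0" and T: "T \<ge> 0" and c: "c > 0" and q: "q > 0"
    and h1: "u \<le> Cd * T powr gam" and h2: "T \<le> c * q / u"
  shows "u \<le> Cd powr (1/(1+gam)) * c powr th * q powr th"
proof -
  have "T powr gam \<le> (c * q / u) powr gam" using T h2 gam1 by (intro powr_mono2) auto
  also have "\<dots> = (c * q) powr gam / u powr gam" using u c q by (simp add: powr_divide)
  finally have "u \<le> Cd * ((c * q) powr gam / u powr gam)" using h1 Cd2
    by (smt (verit) mult_left_mono)
  hence "u * u powr gam \<le> Cd * (c * q) powr gam" using u by (simp add: field_simps)
  hence "u powr (1 + gam) \<le> Cd * (c * q) powr gam" using u by (simp add: powr_add)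
  hence "(u powr (1 + gam)) powr (1/(1+gam)) \<le> (Cd * (c * q) powr gam) powr (1/(1+gam))"
    using gam1 by (intro powr_mono2) auto
  moreover have "(u powr (1 + gam)) powr (1/(1+gam)) = u" using gam1 u by (simp add: powr_powr)
  moreover have "(Cd * (c * q) powr gam) powr (1/(1+gam)) = Cd powr (1/(1+gam)) * c powr th * q powr th"
    using Cd2 c q gam1 by (simp add: powr_mult powr_powr th_def)
  ultimately show ?thesis by simp
qed

lemma Dset_growth: assumes b: "0 < b" and ab: "b \<le> a"
  shows "vol {w. D x w < a} \<le> Cg * (a / b) powr th * vol {w. D x w < b}"
proof -
  define Sa Sb where "Sa = {w. D x w < a}" and "Sb = {w. D x w < b}"
  define q where "q = a / b"
  have q1: "q \<ge> 1" unfolding q_def using b ab by simp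
  have qth: "q powr th \<ge> 1" using q1 th_bounds by (intro ge_one_powr_ge_zero) auto
  have Cg1: "Cg \<ge> Cd" unfolding Cg_def using Cd2 by simp
  have finA: "finite Sa" "finite Sb" unfolding Sa_def Sb_def by (rule Dset_fin)+
  define Z where "Z = {R x w | w. K1 * h x (R x w) \<ge> b}"
  obtain w1 where w1: "R x w1 > b / mx x" using unbounded_from by blast
  have bm: "b / mx x > 0" using b mx_pos[of x] by simp
  have "w1 \<noteq> x"
  proof
    assume "w1 = x"
    hence "R x w1 = 0" by simp
    thus False using w1 bm by simp
  qed
  hence "h x (R x w1) \<ge> R x w1 * mx x" by (intro h_ge) auto
  moreover have "R x w1 * mx x > b" using w1 mx_pos[of x] by (simp add: field_simps)
  moreover have "h x (R x w1) \<le> K1 * h x (R x w1)" using K1_ge h_nn[of "R x w1" x] R_nonneg[of x w1]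
    by (simp add: mult_le_cancel_right1)
  ultimately have "R x w1 \<in> Z" unfolding Z_def by fastforce
  hence Zne: "Z \<noteq> {}" by blast
  have Zbdd: "bdd_below Z" unfolding Z_def by (rule bdd_belowI[of _ 0]) (auto simp: R_nonneg)
  define \<rho>' where "\<rho>' = Inf Z"
  have Zlow: "z \<ge> 1 / mx x" if zZ: "z \<in> Z" for z
  proof -
    obtain w where w: "z = R x w" "K1 * h x (R x w) \<ge> b" using zZ Z_def by blast
    have "w \<noteq> x" using w b by (auto simp: h_def)
    thus ?thesis using R_ge w by simp
  qed
  have rp: "\<rho>' \<ge> 1 / mx x" unfolding \<rho>'_def by (rule cInf_greatest[OF Zne Zlow])
  hence rpos: "\<rho>' > 0" using mx_pos[of x] by (smt (verit) divide_pos_pos)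
  define v' where "v' = v x \<rho>'"
  have v'pos: "v' > 0" unfolding v'_def using v_pos rpos by simp
  have ballSb: "gball R x \<rho>' \<subseteq> Sb"
  proof
    fix w assume "w \<in> gball R x \<rho>'"
    hence w: "R x w < \<rho>'" by (simp add: gball_def)
    have "\<not> K1 * h x (R x w) \<ge> b"
    proof
      assume "K1 * h x (R x w) \<ge> b"
      hence "R x w \<in> Z" unfolding Z_def by blast
      hence "\<rho>' \<le> R x w" unfolding \<rho>'_def by (rule cInf_lower[OF _ Zbdd])
      thus False using w by simp
    qed
    thus "w \<in> Sb" unfolding Sb_def using D_upper[of x w] by simp
  qed
  have v'Sb: "v' \<le> vol Sb" unfolding v'_def using v_vol[OF rpos] vol_mono[OF finA(2) ballSb] by simp
  obtain z0 where z0: "z0 \<in> Z" "z0 < 2 * \<rho>'"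
    using cInf_less_iff[OF Zne Zbdd, of "2 * \<rho>'"] rpos unfolding \<rho>'_def by auto
  obtain w0 where w0: "z0 = R x w0" "K1 * h x (R x w0) \<ge> b" using z0 Z_def by blast
  have "b \<le> K1 * h x (R x w0)" using w0 by simp
  also have "\<dots> \<le> K1 * h x (2 * \<rho>')" using w0 z0 R_nonneg[of x w0] K1_ge by (intro mult_left_mono h_mono) auto
  also have "\<dots> = K1 * 2 * \<rho>' * v x (2 * \<rho>')" by (simp add: h_def)
  also have "\<dots> \<le> K1 * 2 * \<rho>' * (Cd * v')" unfolding v'_def using v_dbl[OF rpos] K1_ge rpos by (intro mult_left_mono) auto
  finally have bb: "b \<le> (2 * K1 * Cd) * (\<rho>' * v')" by (simp add: ac_simps)
  have xSa: "x \<in> Sa" unfolding Sa_def using b ab by simp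
  define \<sigma> where "\<sigma> = Max (R x ` Sa)"
  have \<sigma>in: "\<sigma> \<in> R x ` Sa" unfolding \<sigma>_def using finA(1) xSa by (intro Max_in) auto
  then obtain ws where ws: "ws \<in> Sa" "R x ws = \<sigma>" by blast
  have \<sigma>ge: "R x w \<le> \<sigma>" if "w \<in> Sa" for w unfolding \<sigma>_def using finA(1) that by (intro Max_ge) auto
  have goal1: "Cd * v' \<le> Cg * q powr th * vol Sb"
  proof -
    have "Cd * v' \<le> Cg * v'" using Cg1 v'pos by (intro mult_right_mono) auto
    also have "\<dots> \<le> Cg * (q powr th * vol Sb)"
    proof -
      have "v' \<le> 1 * vol Sb" using v'Sb by simp
      also have "\<dots> \<le> q powr th * vol Sb" using qth vol_nn by (intro mult_right_mono) auto
      finally show ?thesis using Cg1 Cd2 by (intro mult_left_mono) auto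
    qed
    finally show ?thesis by (simp add: mult.assoc)
  qed
  show ?thesis
  proof (cases "\<sigma> = 0")
    case True
    have "Sa \<subseteq> {x}"
    proof
      fix w assume "w \<in> Sa"
      hence "R x w \<le> 0" using \<sigma>ge True by fastforce
      thus "w \<in> {x}" using R_pos by (metis not_le singletonI)
    qed
    hence "vol Sa \<le> vol {x}" by (intro vol_mono) auto
    also have "\<dots> = mx x" by (simp add: vol_def)
    also have "\<dots> \<le> v'" unfolding v'_def by (rule v_ge[OF rpos])
    also have "\<dots> \<le> Cd * v'" using Cd2 v'pos by simp
    also have "\<dots> \<le> Cg * q powr th * vol Sb" by (rule goal1)
    finally show ?thesis unfolding Sa_def Sb_def q_def .
  next
    case False
    have sp: "\<sigma> > 0" using False \<sigma>in R_nonneg by (metis imageE less_eq_real_def)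
    have "Sa \<subseteq> gball R x (2 * \<sigma>)"
    proof
      fix w assume "w \<in> Sa"
      hence "R x w \<le> \<sigma>" by (rule \<sigma>ge)
      thus "w \<in> gball R x (2 * \<sigma>)" using sp by (simp add: gball_def)
    qed
    hence "vol Sa \<le> vol (gball R x (2 * \<sigma>))" using ball_finite[of "2 * \<sigma>" x] sp by (intro vol_mono) auto
    also have "\<dots> = v x (2 * \<sigma>)" using v_vol[of "2 * \<sigma>" x] sp by simp
    also have "\<dots> \<le> Cd * v x \<sigma>" by (rule v_dbl[OF sp])
    finally have volSa: "vol Sa \<le> Cd * v x \<sigma>" .
    have "h x \<sigma> \<le> D x ws" using D_lower[of x ws] ws by simp
    also have "\<dots> < a" using ws Sa_def by simp
    finally have sM: "\<sigma> * v x \<sigma> < a" by (simp add: h_def)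
    show ?thesis
    proof (cases "\<sigma> \<le> \<rho>'")
      case True
      have "vol Sa \<le> Cd * v x \<sigma>" by (rule volSa)
      also have "\<dots> \<le> Cd * v'" unfolding v'_def using True sp Cd2 by (intro mult_left_mono v_mono) auto
      also have "\<dots> \<le> Cg * q powr th * vol Sb" by (rule goal1)
      finally show ?thesis unfolding Sa_def Sb_def q_def .
    next
      case False
      define T where "T = \<sigma> / \<rho>'"
      define u where "u = v x \<sigma> / v'"
      have up: "u > 0" unfolding u_def using v_pos[OF sp] v'pos by simp
      have Tp: "T \<ge> 0" unfolding T_def using sp rpos by simp
      have h1: "u \<le> Cd * T powr gam"
      proof -
        have "v x \<sigma> \<le> Cd * (\<sigma> / \<rho>') powr gam * v'" unfolding v'_def using False rpos by (intro v_poly) auto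
        thus ?thesis unfolding u_def T_def using v'pos by (simp add: pos_divide_le_eq)
      qed
      have h2: "T \<le> (2 * K1 * Cd) * q / u"
      proof -
        have "T * u * (\<rho>' * v') = \<sigma> * v x \<sigma>" unfolding T_def u_def using rpos v'pos by simp
        also have "\<dots> \<le> a" using sM by simp
        also have "a = q * b" unfolding q_def using b by simp
        also have "\<dots> \<le> q * ((2 * K1 * Cd) * (\<rho>' * v'))" using bb q1 by (intro mult_left_mono) auto
        finally have "T * u * (\<rho>' * v') \<le> (q * (2 * K1 * Cd)) * (\<rho>' * v')" by (simp add: ac_simps)
        hence "T * u \<le> q * (2 * K1 * Cd)" using rpos v'pos by (simp add: mult_le_cancel_right)
        thus ?thesis using up by (simp add: pos_le_divide_eq ac_simps)
      qed
      have ub: "u \<le> Cd powr (1/(1+gam)) * (2 * K1 * Cd) powr th * q powr th"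
        by (rule u_bound[OF up Tp _ _ h1 h2]) (use K1_ge Cd2 q1 in auto)
      have "vol Sa \<le> Cd * v x \<sigma>" by (rule volSa)
      also have "v x \<sigma> = u * v'" unfolding u_def using v'pos by simp
      also have "Cd * (u * v') \<le> Cd * ((Cd powr (1/(1+gam)) * (2 * K1 * Cd) powr th * q powr th) * v')"
        using ub v'pos Cd2 by (intro mult_left_mono mult_right_mono) auto
      also have "\<dots> \<le> Cg * q powr th * v'"
        unfolding Cg_def using Cd2 v'pos by (simp add: ac_simps mult_left_mono mult_right_mono)
      also have "\<dots> \<le> Cg * q powr th * vol Sb" using v'Sb Cg1 Cd2 by (intro mult_left_mono) auto
      finally show ?thesis unfolding Sa_def Sb_def q_def .
    qed
  qed
qed

end

context rgraph begin

definition alpha where "alpha = max (beta * th) 1"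

lemma alpha_props: "1 \<le> alpha" "alpha < beta"
proof -
  show "1 \<le> alpha" unfolding alpha_def by simp
  have "beta * th < beta * 1" using th_bounds beta_ge by (intro mult_strict_left_mono) auto
  moreover have "1 < beta" using beta_ge by simp
  ultimately show "alpha < beta" unfolding alpha_def by simp
qed

lemma C4: "\<exists>C>0. \<forall>x r s. r > s \<and> s > 0 \<longrightarrow>
          gvol E mu dd x r \<le> ennreal (C * (r / s) powr alpha) * gvol E mu dd x s"
proof (intro exI[of _ "Cg * 2 powr (beta * th)"] conjI allI impI)
  show "Cg * 2 powr (beta * th) > 0" unfolding Cg_def using Cd2 by simp
  fix x :: 'a and r s :: real assume rs: "r > s \<and> s > 0"
  have r: "r > 0" using rs by linarith
  have s: "s > 0" using rs by linarith
  have rs': "s < r" using rs by linarith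
  define a b where "a = (2 * r) powr beta" and "b = s powr beta"
  have b0: "b > 0" unfolding b_def using s by simp
  have ba: "b \<le> a" unfolding a_def b_def using rs beta_ge by (intro powr_mono2) auto
  have q: "a / b = (2 * r / s) powr beta" unfolding a_def b_def using r s by (simp add: powr_divide)
  have "(a / b) powr th = (2 * r / s) powr (beta * th)" unfolding q by (simp add: powr_powr)
  also have "\<dots> = 2 powr (beta * th) * (r / s) powr (beta * th)" using r s by (simp add: powr_mult[symmetric])
  also have "(r / s) powr (beta * th) \<le> (r / s) powr alpha"
    unfolding alpha_def using rs by (intro powr_mono) auto
  hence "2 powr (beta * th) * (r / s) powr (beta * th) \<le> 2 powr (beta * th) * (r / s) powr alpha" by simp
  finally have qb: "(a / b) powr th \<le> 2 powr (beta * th) * (r / s) powr alpha" .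
  have Cg0: "Cg \<ge> 0" unfolding Cg_def using Cd2 by simp
  have "vol (gball dd x r) \<le> vol {w. D x w < a}" unfolding a_def using dd_ball_sub[OF r] Dset_fin by (intro vol_mono)
  also have "\<dots> \<le> Cg * (a / b) powr th * vol {w. D x w < b}" by (rule Dset_growth[OF b0 ba])
  also have "\<dots> \<le> Cg * (a / b) powr th * vol (gball dd x s)"
    unfolding b_def using dd_ball_sup[OF s] dd_ball_fin'[of x s] Cg0 by (intro mult_left_mono vol_mono) auto
  also have "\<dots> \<le> Cg * (2 powr (beta * th) * (r / s) powr alpha) * vol (gball dd x s)"
    using qb Cg0 vol_nn by (intro mult_right_mono mult_left_mono) auto
  finally have "vol (gball dd x r) \<le> (Cg * 2 powr (beta * th) * (r / s) powr alpha) * vol (gball dd x s)"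
    by (simp add: ac_simps)
  hence "ennreal (vol (gball dd x r)) \<le> ennreal ((Cg * 2 powr (beta * th) * (r / s) powr alpha) * vol (gball dd x s))"
    by (rule ennreal_leI)
  also have "\<dots> = ennreal (Cg * 2 powr (beta * th) * (r / s) powr alpha) * ennreal (vol (gball dd x s))"
    using Cg0 vol_nn by (intro ennreal_mult) auto
  finally show "gvol E mu dd x r \<le> ennreal (Cg * 2 powr (beta * th) * (r / s) powr alpha) * gvol E mu dd x s"
    unfolding gvol_dd .
qed

lemma C3: "\<exists>c C. c > 0 \<and> C > 0 \<and> (\<forall>x y.
          ennreal (c * dd x y powr beta) \<le> ennreal (R x y) * gvol E mu dd x (dd x y) \<and>
          ennreal (R x y) * gvol E mu dd x (dd x y) \<le> ennreal (C * dd x y powr beta))"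
proof (intro exI conjI allI)
  show "1 / (K1 * Cd * Lam powr gam) > 0" using K1_ge Cd2 Lam_ge by simp
  show "Cd * Lam powr gam * 2 powr beta > 0" using Cd2 Lam_ge by simp
  fix x y
  have eq: "ennreal (R x y) * gvol E mu dd x (dd x y) = ennreal (R x y * vol (gball dd x (dd x y)))"
    unfolding gvol_dd using R_nonneg vol_nn by (simp add: ennreal_mult)
  show "ennreal (1 / (K1 * Cd * Lam powr gam) * dd x y powr beta) \<le> ennreal (R x y) * gvol E mu dd x (dd x y)"
  proof (cases "x = y")
    case True thus ?thesis using qm.d_xx by simp
  next
    case False thus ?thesis unfolding eq by (intro ennreal_leI C3_lower)
  qed
  show "ennreal (R x y) * gvol E mu dd x (dd x y) \<le> ennreal (Cd * Lam powr gam * 2 powr beta * dd x y powr beta)"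
  proof (cases "x = y")
    case True thus ?thesis using qm.d_xx by simp
  next
    case False thus ?thesis unfolding eq by (intro ennreal_leI C3_upper)
  qed
qed

end

theorem proposition6p1:
  fixes E :: "'a \<Rightarrow> 'a \<Rightarrow> bool" and mu :: "'a \<Rightarrow> 'a \<Rightarrow> real"
  assumes "countable (UNIV :: 'a set)" and "infinite (UNIV :: 'a set)"
    and "simple_graph E" and "connected_graph E" and "bounded_degree E"
    and "conductance E mu" and "p0_cond E mu"
    and "volume_doubling E mu (eff_res E mu)"
    and "\<forall>M. \<exists>x y. eff_res E mu x y > M"
    and "\<forall>x r. r > 0 \<longrightarrow> gvol E mu (eff_res E mu) x r < \<infinity>"
  shows "\<exists>d :: 'a \<Rightarrow> 'a \<Rightarrow> real. \<exists>\<alpha> \<beta> :: real. is_metric d \<and> 1 \<le> \<alpha> \<and> \<alpha> < \<beta>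
     \<and> quasisymmetric_to d (eff_res E mu)
     \<and> (\<exists>c C. c > 0 \<and> C > 0 \<and> (\<forall>x y.
          ennreal (c * d x y powr \<beta>) \<le> ennreal (eff_res E mu x y) * gvol E mu d x (d x y) \<and>
          ennreal (eff_res E mu x y) * gvol E mu d x (d x y) \<le> ennreal (C * d x y powr \<beta>)))
     \<and> (\<exists>C>0. \<forall>x r s. r > s \<and> s > 0 \<longrightarrow>
          gvol E mu d x r \<le> ennreal (C * (r / s) powr \<alpha>) * gvol E mu d x s)
     \<and> Inf {d x y | x y. x \<noteq> y} > 0
     \<and> (\<exists>C\<^sub>p>0. \<forall>x y. E x y \<longrightarrow> d x y \<le> C\<^sub>p)
     \<and> (\<forall>x r. r > 0 \<longrightarrow> finite (gball d x r))"
proof -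
  interpret rgraph E mu
    by (unfold_locales) (use assms in auto)
  show ?thesis
    apply (rule exI[of _ dd], rule exI[of _ alpha], rule exI[of _ beta])
    using qm.d_metric alpha_props C2 C3 C4 C5 C6 dd_ball_fin by blast
qed


end
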